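(* Assume condition (N), $\chi(0)<0$, $g(s,\tau)\leq g'(0,\tau)s$ for all $s\geq0$, $\tau\in X$, and condition (L) with constant $\delta>0$. Suppose $\chi$ is defined on an open interval $(0,\bar\omega)$ and changes sign there; let $\lambda\in(0,\bar\omega)$ be the leftmost positive zero of $\chi$, and let $\epsilon>0$ be such that $\nu:=\lambda+\epsilon<\bar\omega$ and $\chi(\nu)>0$. Then $\mathfrak K$ is a closed, bounded, convex subset of the Banach space $\mathfrak X$, $\mathcal A(\mathfrak K)\subseteq\mathfrak K$, and $\mathcal A:\mathfrak K\to\mathfrak K$ is completely continuous (continuous, with $\mathcal A(\mathfrak K)$ relatively compact).
   Context: Let $(X,\mu)$ be a finite measure space. Let $K:\mathbb{R}\times X\to[0,\infty)$ be measurable and integrable on $\mathbb{R}\times X$, with $\int_{\mathbb{R}}K(s,\tau)\,ds>0$ for every $\tau$. Let $g:[0,\infty)\times X\to[0,\infty)$ be measurable, with $g(0,\tau)=0$, $g(\cdot,\tau)$ continuous for each $\tau$, and the derivative $g'(0,\tau)$ at $0$ existing and positive. $\chi(z)=1-\int_X\int_{\mathbb{R}}K(s,\tau)g'(0,\tau)e^{-sz}\,ds\,d\mu(\tau)$ where the integral converges. Condition (N): (N1) there is $\tau_0\in X$ with $\mu(\{\tau_0\})=1$ such that $g(v,\tau)$ is increasing in $v$ for each $\tau\neq\tau_0$ and $g(v,\tau_0)>0$ for $v>0$; $\tilde g(v)=\int_{X\setminus\{\tau_0\}}g(v,\tau)\left(\int_{\mathbb{R}}K(s,\tau)ds\right)d\mu(\tau)$.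 (N2) there is $\zeta_2>0$ such that $\Theta(v)=v-\tilde g(v)$ is strictly increasing on $[0,\zeta_2]$ and $\Theta(\zeta_2)>C\max_{v\geq0}g(v,\tau_0)$, $C=\int_{\mathbb{R}}K(s,\tau_0)ds$. Condition (L): $g$ is bounded, $g(s,\tau)>0$ for $s>0$, and there is $\delta>0$ with $g(s,\tau)=g'(0,\tau)s$ for all $s\in[0,\delta)$, $\tau\in X$. $\mathfrak X=\{\varphi\in C(\mathbb{R},\mathbb{R}):\|\varphi\|=\sup_{s\leq0}e^{-0.5\lambda s}|\varphi(s)|+\sup_{s\geq0}e^{-\nu s}|\varphi(s)|<+\infty\}$ with norm $\|\cdot\|$. $\phi^+(t)=\delta e^{\lambda t}$; $\phi^-(t)=\delta e^{\lambda t}(1-e^{\epsilon t})$ for $t\leq0$ and $\phi^-(t)=0$ for $t>0$. $\mathfrak K=\{\varphi\in\mathfrak X:\phi^-(t)\leq\varphi(t)\leq\phi^+(t)\ \forall t\in\mathbb{R}\}$. $\mathcal A\varphi(t)=\int_X d\mu(\tau)\int_{\mathbb{R}}K(s,\tau)g(\varphi(t-s),\tau)\,ds$. *)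

theory Defs
  imports "HOL-Analysis.Analysis"
begin

definition chi :: "'b measure \<Rightarrow> (real \<Rightarrow> 'b \<Rightarrow> real) \<Rightarrow> ('b \<Rightarrow> real) \<Rightarrow> real \<Rightarrow> real" where
  "chi M K gd z = 1 - (\<integral>\<tau>. (\<integral>s. K s \<tau> * gd \<tau> * exp (- s * z) \<partial>lborel) \<partial>M)"

definition chi_defined :: "'b measure \<Rightarrow> (real \<Rightarrow> 'b \<Rightarrow> real) \<Rightarrow> ('b \<Rightarrow> real) \<Rightarrow> real \<Rightarrow> bool" where
  "chi_defined M K gd z \<longleftrightarrow> integrable (lborel \<Otimes>\<^sub>M M) (\<lambda>(s, \<tau>). K s \<tau> * gd \<tau> * exp (- s * z))"

definition wnorm :: "real \<Rightarrow> real \<Rightarrow> (real \<Rightarrow> real) \<Rightarrow> real" where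
  "wnorm lam nu \<phi> = (SUP s\<in>{..0}. exp (- (lam / 2) * s) * \<bar>\<phi> s\<bar>)
                   + (SUP s\<in>{0..}. exp (- nu * s) * \<bar>\<phi> s\<bar>)"

definition Xsp :: "real \<Rightarrow> real \<Rightarrow> (real \<Rightarrow> real) set" where
  "Xsp lam nu = {\<phi>. continuous_on UNIV \<phi>
      \<and> bdd_above ((\<lambda>s. exp (- (lam / 2) * s) * \<bar>\<phi> s\<bar>) ` {..0})
      \<and> bdd_above ((\<lambda>s. exp (- nu * s) * \<bar>\<phi> s\<bar>) ` {0..})}"

definition phi_plus :: "real \<Rightarrow> real \<Rightarrow> real \<Rightarrow> real" where
  "phi_plus \<delta> lam t = \<delta> * exp (lam * t)"

definition phi_minus :: "real \<Rightarrow> real \<Rightarrow> real \<Rightarrow> real \<Rightarrow> real" where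
  "phi_minus \<delta> lam eps t = (if t \<le> 0 then \<delta> * exp (lam * t) * (1 - exp (eps * t)) else 0)"

definition Kset :: "real \<Rightarrow> real \<Rightarrow> real \<Rightarrow> real \<Rightarrow> (real \<Rightarrow> real) set" where
  "Kset \<delta> lam eps nu = {\<phi> \<in> Xsp lam nu.
      \<forall>t. phi_minus \<delta> lam eps t \<le> \<phi> t \<and> \<phi> t \<le> phi_plus \<delta> lam t}"

definition Aop :: "'b measure \<Rightarrow> (real \<Rightarrow> 'b \<Rightarrow> real) \<Rightarrow> (real \<Rightarrow> 'b \<Rightarrow> real)
                   \<Rightarrow> (real \<Rightarrow> real) \<Rightarrow> real \<Rightarrow> real" where
  "Aop M K g \<phi> t = (\<integral>\<tau>. (\<integral>s. K s \<tau> * g (\<phi> (t - s)) \<tau> \<partial>lborel) \<partial>M)"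

end

theory Submission
  imports Defs "HOL-Complex_Analysis.Great_Picard"
begin

definition tc :: "(real \<Rightarrow> real) \<Rightarrow> bool" where
  "tc h \<longleftrightarrow> ((\<lambda>x. \<integral>s. \<bar>h (s + x) - h s\<bar> \<partial>lborel) \<longlongrightarrow> 0) (at 0)"

lemma integrable_shift:
  assumes "integrable lborel (f::real\<Rightarrow>real)"
  shows "integrable lborel (\<lambda>s. f (s + x))"
  using lborel_integrable_real_affine[OF assms, of 1 x] by (simp add: add.commute)

lemma integral_shift_lborel:
  "(\<integral>s. (f::real\<Rightarrow>real) (s + x) \<partial>lborel) = (\<integral>s. f s \<partial>lborel)"
  using lborel_integral_real_affine[of 1 f x] by (simp add: add.commute)

lemma tc_approx:
  assumes h: "integrable lborel h"
    and ap: "\<And>e. e > 0 \<Longrightarrow> \<exists>f. integrable lborel f \<and> tc f \<and> (\<integral>s. \<bar>h s - f s\<bar> \<partial>lborel) < e"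
  shows "tc h"
  unfolding tc_def
proof (rule tendstoI)
  fix e :: real assume e: "e > 0"
  obtain f where f: "integrable lborel f" "tc f" and hf: "(\<integral>s. \<bar>h s - f s\<bar> \<partial>lborel) < e/3"
    using ap[of "e/3"] e by auto
  have ev: "\<forall>\<^sub>F x in at 0. dist (\<integral>s. \<bar>f (s + x) - f s\<bar> \<partial>lborel) 0 < e/3"
  proof -
    have "e/3 > 0" using e by simp
    from tendstoD[OF f(2)[unfolded tc_def] this] show ?thesis .
  qed
  show "\<forall>\<^sub>F x in at 0. dist (\<integral>s. \<bar>h (s + x) - h s\<bar> \<partial>lborel) 0 < e"
    using ev
  proof eventually_elim
    case (elim x)
    have i1: "integrable lborel (\<lambda>s. \<bar>h (s + x) - f (s + x)\<bar>)"
      using integrable_shift[OF h, of x] integrable_shift[OF f(1), of x] by auto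
    have i2: "integrable lborel (\<lambda>s. \<bar>f (s + x) - f s\<bar>)"
      using integrable_shift[OF f(1), of x] f(1) by auto
    have i3: "integrable lborel (\<lambda>s. \<bar>f s - h s\<bar>)"
      using h f(1) by auto
    have "(\<integral>s. \<bar>h (s + x) - h s\<bar> \<partial>lborel) \<le>
        (\<integral>s. \<bar>h (s + x) - f (s + x)\<bar> + \<bar>f (s + x) - f s\<bar> + \<bar>f s - h s\<bar> \<partial>lborel)"
      apply (rule integral_mono)
      using integrable_shift[OF h, of x] h i1 i2 i3 by auto
    also have "\<dots> = (\<integral>s. \<bar>h (s + x) - f (s + x)\<bar> \<partial>lborel) + (\<integral>s. \<bar>f (s + x) - f s\<bar> \<partial>lborel)
          + (\<integral>s. \<bar>f s - h s\<bar> \<partial>lborel)"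
      using i1 i2 i3 by simp
    also have "(\<integral>s. \<bar>h (s + x) - f (s + x)\<bar> \<partial>lborel) = (\<integral>s. \<bar>h s - f s\<bar> \<partial>lborel)"
      using integral_shift_lborel[of "\<lambda>s. \<bar>h s - f s\<bar>" x] by simp
    also have "(\<integral>s. \<bar>f s - h s\<bar> \<partial>lborel) = (\<integral>s. \<bar>h s - f s\<bar> \<partial>lborel)"
      by (simp add: abs_minus_commute)
    finally have "(\<integral>s. \<bar>h (s + x) - h s\<bar> \<partial>lborel) < e"
      using hf elim by simp
    moreover have "(\<integral>s. \<bar>h (s + x) - h s\<bar> \<partial>lborel) \<ge> 0" by simp
    ultimately show ?case by simp
  qed
qed

lemma tc_dom:
  assumes h: "integrable lborel h" and f: "integrable lborel f" "tc f"
    and g: "integrable lborel g" "tc g"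
    and le: "\<And>s x. \<bar>h (s + x) - h s\<bar> \<le> \<bar>f (s + x) - f s\<bar> + \<bar>g (s + x) - g s\<bar>"
  shows "tc h"
  unfolding tc_def
proof (rule tendsto_sandwich[of "\<lambda>_. 0" _ _ "\<lambda>x. (\<integral>s. \<bar>f (s + x) - f s\<bar> \<partial>lborel) + (\<integral>s. \<bar>g (s + x) - g s\<bar> \<partial>lborel)"])
  show "\<forall>\<^sub>F x in at 0. 0 \<le> (\<integral>s. \<bar>h (s + x) - h s\<bar> \<partial>lborel)" by simp
  show "\<forall>\<^sub>F x in at 0. (\<integral>s. \<bar>h (s + x) - h s\<bar> \<partial>lborel) \<le>
     (\<integral>s. \<bar>f (s + x) - f s\<bar> \<partial>lborel) + (\<integral>s. \<bar>g (s + x) - g s\<bar> \<partial>lborel)"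
  proof (rule always_eventually, rule allI)
    fix x
    have i1: "integrable lborel (\<lambda>s. \<bar>f (s + x) - f s\<bar>)"
      using integrable_shift[OF f(1), of x] f(1) by auto
    have i2: "integrable lborel (\<lambda>s. \<bar>g (s + x) - g s\<bar>)"
      using integrable_shift[OF g(1), of x] g(1) by auto
    have "(\<integral>s. \<bar>h (s + x) - h s\<bar> \<partial>lborel) \<le> (\<integral>s. \<bar>f (s + x) - f s\<bar> + \<bar>g (s + x) - g s\<bar> \<partial>lborel)"
      apply (rule integral_mono)
      using integrable_shift[OF h, of x] h i1 i2 le by auto
    also have "\<dots> = (\<integral>s. \<bar>f (s + x) - f s\<bar> \<partial>lborel) + (\<integral>s. \<bar>g (s + x) - g s\<bar> \<partial>lborel)"
      using i1 i2 by simp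
    finally show "(\<integral>s. \<bar>h (s + x) - h s\<bar> \<partial>lborel) \<le>
     (\<integral>s. \<bar>f (s + x) - f s\<bar> \<partial>lborel) + (\<integral>s. \<bar>g (s + x) - g s\<bar> \<partial>lborel)" .
  qed
  show "((\<lambda>x. (\<integral>s. \<bar>f (s + x) - f s\<bar> \<partial>lborel) + (\<integral>s. \<bar>g (s + x) - g s\<bar> \<partial>lborel)) \<longlongrightarrow> 0) (at 0)"
    using tendsto_add[OF f(2)[unfolded tc_def] g(2)[unfolded tc_def]] by simp
qed simp

lemma tc_add:
  assumes "integrable lborel f" "tc f" "integrable lborel g" "tc g"
  shows "tc (\<lambda>s. f s + g s)"
  by (rule tc_dom[OF _ assms]) (use assms in auto)

lemma tc_scale:
  assumes "tc f" shows "tc (\<lambda>s. f s * c)"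
proof -
  have "(\<lambda>x. \<integral>s. \<bar>f (s + x) * c - f s * c\<bar> \<partial>lborel) = (\<lambda>x. \<bar>c\<bar> * (\<integral>s. \<bar>f (s + x) - f s\<bar> \<partial>lborel))"
  proof
    fix x
    have "\<And>s. \<bar>f (s + x) * c - f s * c\<bar> = \<bar>c\<bar> * \<bar>f (s + x) - f s\<bar>"
      by (metis abs_mult left_diff_distrib mult.commute)
    then show "(\<integral>s. \<bar>f (s + x) * c - f s * c\<bar> \<partial>lborel) = \<bar>c\<bar> * (\<integral>s. \<bar>f (s + x) - f s\<bar> \<partial>lborel)"
      by simp
  qed
  then show ?thesis using tendsto_mult_right_zero[OF assms[unfolded tc_def], of "\<bar>c\<bar>"]
    unfolding tc_def by simp
qed

lemma tc_Icc: "tc (indicator {a..b::real})"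
proof (cases "a \<le> b")
  case False
  then show ?thesis by (simp add: tc_def)
next
  case True
  show ?thesis
  unfolding tc_def
  proof (rule tendsto_sandwich[of "\<lambda>_. 0" _ _ "\<lambda>x. 4 * \<bar>x\<bar>"])
    show "\<forall>\<^sub>F x in at 0. (\<integral>s. \<bar>indicator {a..b} (s + x) - indicator {a..b} s :: real\<bar> \<partial>lborel) \<le> 4 * \<bar>x\<bar>"
    proof (rule always_eventually, rule allI)
      fix x :: real
      have ia: "integrable lborel (indicator {a - \<bar>x\<bar>..a + \<bar>x\<bar>} :: real \<Rightarrow> real)"
        by (auto intro!: integrable_real_indicator)
      have ib: "integrable lborel (indicator {b - \<bar>x\<bar>..b + \<bar>x\<bar>} :: real \<Rightarrow> real)"
        by (auto intro!: integrable_real_indicator)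
      have "(\<integral>s. \<bar>indicator {a..b} (s + x) - indicator {a..b} s :: real\<bar> \<partial>lborel) \<le>
          (\<integral>s. indicator {a - \<bar>x\<bar>..a + \<bar>x\<bar>} s + (indicator {b - \<bar>x\<bar>..b + \<bar>x\<bar>} s :: real) \<partial>lborel)"
      proof (rule integral_mono)
        show "integrable lborel (\<lambda>s. \<bar>indicator {a..b} (s + x) - indicator {a..b} s :: real\<bar>)"
          by (intro integrable_abs Bochner_Integration.integrable_diff integrable_shift)
            (auto intro!: integrable_real_indicator simp: emeasure_lborel_Icc_eq)
        show "integrable lborel (\<lambda>s. indicator {a - \<bar>x\<bar>..a + \<bar>x\<bar>} s + indicator {b - \<bar>x\<bar>..b + \<bar>x\<bar>} s :: real)"
          using ia ib by auto
        fix s show "\<bar>indicator {a..b} (s + x) - indicator {a..b} s :: real\<bar> \<le>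
          indicator {a - \<bar>x\<bar>..a + \<bar>x\<bar>} s + indicator {b - \<bar>x\<bar>..b + \<bar>x\<bar>} s"
          by (auto split: split_indicator)
      qed
      also have "\<dots> = 4 * \<bar>x\<bar>"
        using ia ib by (simp add: measure_def)
      finally show "(\<integral>s. \<bar>indicator {a..b} (s + x) - indicator {a..b} s :: real\<bar> \<partial>lborel) \<le> 4 * \<bar>x\<bar>" .
    qed
    show "((\<lambda>x. 4 * \<bar>x\<bar>) \<longlongrightarrow> 0) (at (0::real))"
      by (rule tendsto_eq_intros | simp)+
  qed (auto intro: tendsto_const)
qed

lemma tc_zero: "tc (\<lambda>s. 0)"
  by (simp add: tc_def)

lemma tc_union:
  assumes A: "A \<in> sets borel" "emeasure lborel A < \<infinity>" "tc (indicator A)"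
    and B: "B \<in> sets borel" "emeasure lborel B < \<infinity>" "tc (indicator B)"
  shows "tc (indicator (A \<union> B))"
proof (rule tc_dom[of _ "indicator A" "indicator B"])
  have "emeasure lborel (A \<union> B) \<le> emeasure lborel A + emeasure lborel B"
    using A B by (intro emeasure_subadditive) auto
  also have "\<dots> < \<infinity>" using A B by (simp add: ennreal_add_less_top)
  finally show "integrable lborel (indicat_real (A \<union> B))"
    using A B by (intro integrable_real_indicator) auto
  show "integrable lborel (indicat_real A)" "integrable lborel (indicat_real B)"
    using A B by (auto intro!: integrable_real_indicator)
  fix s x :: real
  show "\<bar>indicat_real (A \<union> B) (s + x) - indicat_real (A \<union> B) s\<bar>
         \<le> \<bar>indicat_real A (s + x) - indicat_real A s\<bar> + \<bar>indicat_real B (s + x) - indicat_real B s\<bar>"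
    by (auto split: split_indicator)
qed (use A B in auto)

lemma tc_open:
  assumes U: "open U" "emeasure lborel U < \<infinity>"
  shows "tc (indicator U :: real \<Rightarrow> real)"
proof -
  obtain D where D: "countable D" "D \<subseteq> Pow U" "\<And>X. X \<in> D \<Longrightarrow> \<exists>a b. X = cbox a b" "\<Union>D = U"
    using open_countable_Union_open_cbox[OF U(1)] by metis
  show ?thesis
  proof (cases "D = {}")
    case True
    then have "U = {}" using D by auto
    then show ?thesis using tc_zero by (simp add: indicator_def[abs_def])
  next
    case False
    define E where "E = from_nat_into D"
    have ED: "E i \<in> D" for i using False E_def by (simp add: from_nat_into)
    have rE: "range E = D" using False D(1) E_def by (simp add: range_from_nat_into)
    define C where "C n = (\<Union>i<n. E i)" for n
    have CU: "C n \<subseteq> U" for n using ED D(2) by (auto simp: C_def)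
    have Cb: "C n \<in> sets borel" for n
    proof -
      have "E i \<in> sets borel" for i using D(3)[OF ED[of i]] by auto
      then show ?thesis unfolding C_def by auto
    qed
    have Cm: "emeasure lborel (C n) < \<infinity>" for n
    proof -
      have "emeasure lborel (C n) \<le> emeasure lborel U" by (rule emeasure_mono[OF CU]) (use U(1) in auto)
      then show ?thesis using U(2) by auto
    qed
    have Ctc: "tc (indicator (C n))" for n
    proof (induction n)
      case 0 then show ?case using tc_zero by (simp add: C_def indicator_def[abs_def])
    next
      case (Suc n)
      obtain a b where ab: "E n = cbox a b" using D(3)[OF ED[of n]] by auto
      have eq: "C (Suc n) = C n \<union> {a..b}" using ab by (auto simp: C_def lessThan_Suc)
      have "emeasure lborel {a..b} < \<infinity>" by (simp add: emeasure_lborel_Icc_eq)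
      then show ?case unfolding eq
        by (intro tc_union[OF Cb Cm Suc _ _ tc_Icc]) auto
    qed
    have Um: "U \<in> sets borel" using U(1) by auto
    have lim: "(\<lambda>n. emeasure lborel (C n)) \<longlonglongrightarrow> emeasure lborel (\<Union>n. C n)"
    proof (rule Lim_emeasure_incseq)
      show "range C \<subseteq> sets lborel" using Cb by auto
      show "incseq C" by (auto simp: incseq_def C_def) (metis lessThan_iff order_less_le_trans)
    qed
    have UC: "(\<Union>n. C n) = U"
    proof
      show "(\<Union>n. C n) \<subseteq> U" using CU by auto
      show "U \<subseteq> (\<Union>n. C n)"
      proof
        fix x assume "x \<in> U"
        then obtain X where "X \<in> D" "x \<in> X" using D(4) by auto
        then obtain i where "E i = X" using rE by auto
        then show "x \<in> (\<Union>n. C n)" using \<open>x \<in> X\<close> by (auto simp: C_def intro!: exI[of _ "Suc i"])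
      qed
    qed
    have limr: "(\<lambda>n. measure lborel (C n)) \<longlonglongrightarrow> measure lborel U"
    proof -
      have "(\<lambda>n. enn2real (emeasure lborel (C n))) \<longlonglongrightarrow> enn2real (emeasure lborel U)"
        using lim UC U(2) by (intro tendsto_enn2real) auto
      then show ?thesis by (simp add: measure_def)
    qed
    show ?thesis
    proof (rule tc_approx)
      show "integrable lborel (indicat_real U)" using U Um by (intro integrable_real_indicator) auto
      fix e :: real assume e: "e > 0"
      have "(\<lambda>n. measure lborel U - measure lborel (C n)) \<longlonglongrightarrow> measure lborel U - measure lborel U"
        by (intro tendsto_intros limr)
      then obtain n where n: "\<bar>(measure lborel U - measure lborel (C n)) - 0\<bar> < e"
        using e by (auto dest!: LIMSEQ_D[where r=e])
      have i1: "integrable lborel (indicat_real (C n))" using Cb Cm by (intro integrable_real_indicator) auto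
      have "(\<integral>s. \<bar>indicat_real U s - indicat_real (C n) s\<bar> \<partial>lborel) = (\<integral>s. indicat_real (U - C n) s \<partial>lborel)"
        using CU[of n] by (intro Bochner_Integration.integral_cong) (auto split: split_indicator)
      also have "\<dots> = measure lborel (U - C n)" by simp
      also have "\<dots> = measure lborel U - measure lborel (C n)"
        using CU[of n] U(2) Cb Um by (intro measure_Diff) (auto simp: less_top)
      finally show "\<exists>f. integrable lborel f \<and> tc f \<and> (\<integral>s. \<bar>indicat_real U s - f s\<bar> \<partial>lborel) < e"
        using n i1 Ctc[of n] by (intro exI[of _ "indicat_real (C n)"]) auto
    qed
  qed
qed

lemma tc_borel:
  assumes A: "A \<in> sets borel" "emeasure lborel A < \<infinity>"
  shows "tc (indicator A :: real \<Rightarrow> real)"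
proof (rule tc_approx)
  show "integrable lborel (indicat_real A)" using A by (intro integrable_real_indicator) auto
  fix e :: real assume e: "e > 0"
  obtain U where U: "open U" "A \<subseteq> U" "emeasure lborel (U - A) < e"
    using outer_regular_lborel[OF A(1) e] by blast
  have Ub: "U \<in> sets borel" using U by auto
  have "emeasure lborel U \<le> emeasure lborel A + emeasure lborel (U - A)"
    using A Ub by (intro emeasure_subadditive[THEN order_trans[rotated]]) (auto intro!: emeasure_mono)
  also have "\<dots> < \<infinity>" using A order.strict_trans[OF U(3) ennreal_less_top] by (simp add: ennreal_add_less_top)
  finally have Um: "emeasure lborel U < \<infinity>" .
  have "(\<integral>s. \<bar>indicat_real A s - indicat_real U s\<bar> \<partial>lborel) = (\<integral>s. indicat_real (U - A) s \<partial>lborel)"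
    using U by (intro Bochner_Integration.integral_cong) (auto split: split_indicator)
  also have "\<dots> = measure lborel (U - A)" by simp
  also have "\<dots> < e"
  proof -
    have "emeasure lborel (U - A) < \<infinity>" using order.strict_trans[OF U(3) ennreal_less_top] by simp
    then show ?thesis using U(3) e by (simp add: measure_def enn2real_less_iff less_top[symmetric])
  qed
  finally show "\<exists>f. integrable lborel f \<and> tc f \<and> (\<integral>s. \<bar>indicat_real A s - f s\<bar> \<partial>lborel) < e"
    using Um Ub U tc_open[OF U(1) Um] by (intro exI[of _ "indicat_real U"]) (auto intro!: integrable_real_indicator)
qed

lemma tc_integrable:
  assumes "integrable lborel (h :: real \<Rightarrow> real)"
  shows "tc h"
  using assms
proof (induct rule: integrable_induct)
  case (base A c)
  then show ?case using tc_scale[OF tc_borel[of A], of c] by simp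
next
  case (add f g)
  then show ?case using tc_add by blast
next
  case (lim f s)
  show ?case
  proof (rule tc_approx[OF lim(5)])
    fix e :: real assume e: "e > 0"
    have "(\<lambda>i. \<integral>x. \<bar>f x - s i x\<bar> \<partial>lborel) \<longlonglongrightarrow> (\<integral>(x::real). 0 \<partial>lborel)"
    proof (rule Bochner_Integration.integral_dominated_convergence[where w="\<lambda>x. 3 * \<bar>f x\<bar>" and f="\<lambda>x. 0" and s="\<lambda>i x. \<bar>f x - s i x\<bar>"])
      show "(\<lambda>x. 0::real) \<in> borel_measurable lborel" by auto
      show "\<And>i. (\<lambda>x. \<bar>f x - s i x\<bar>) \<in> borel_measurable lborel" using lim(1) lim(5) by auto
      show "integrable lborel (\<lambda>x. 3 * \<bar>f x\<bar>)" using lim(5) by auto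
      show "AE x in lborel. (\<lambda>i. \<bar>f x - s i x\<bar>) \<longlonglongrightarrow> 0"
      proof (rule AE_I2)
        fix x :: real assume x: "x \<in> space lborel"
        have "(\<lambda>i. \<bar>f x - s i x\<bar>) \<longlonglongrightarrow> \<bar>f x - f x\<bar>"
          by (intro tendsto_intros lim(3) x)
        then show "(\<lambda>i. \<bar>f x - s i x\<bar>) \<longlonglongrightarrow> 0" by simp
      qed
      show "\<And>i. AE x in lborel. norm \<bar>f x - s i x\<bar> \<le> 3 * \<bar>f x\<bar>"
      proof (rule AE_I2)
        fix i and x :: real assume x: "x \<in> space lborel"
        have "norm (s i x) \<le> 2 * norm (f x)" by (rule lim(4)[OF x])
        then show "norm \<bar>f x - s i x\<bar> \<le> 3 * \<bar>f x\<bar>" by simp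
      qed
    qed
    then obtain i where "\<bar>(\<integral>x. \<bar>f x - s i x\<bar> \<partial>lborel) - 0\<bar> < e"
      using e by (auto dest!: LIMSEQ_D[where r=e])
    then show "\<exists>g. integrable lborel g \<and> tc g \<and> (\<integral>x. \<bar>f x - g x\<bar> \<partial>lborel) < e"
      using lim(1,2) by (intro exI[of _ "s i"]) auto
  qed
qed

locale sett =
  fixes M :: "'b measure" and K :: "real \<Rightarrow> 'b \<Rightarrow> real" and g :: "real \<Rightarrow> 'b \<Rightarrow> real"
    and gd :: "'b \<Rightarrow> real" and B \<delta> lam eps nu :: real
  assumes finM: "finite_measure M"
    and K_meas: "(\<lambda>(s, \<tau>). K s \<tau>) \<in> borel_measurable (lborel \<Otimes>\<^sub>M M)"
    and K_int: "integrable (lborel \<Otimes>\<^sub>M M) (\<lambda>(s, \<tau>). K s \<tau>)"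
    and K_nonneg: "\<And>s \<tau>. \<tau> \<in> space M \<Longrightarrow> K s \<tau> \<ge> 0"
    and K_pos: "\<And>\<tau>. \<tau> \<in> space M \<Longrightarrow> (\<integral>s. K s \<tau> \<partial>lborel) > 0"
    and g_meas: "(\<lambda>(v, \<tau>). g (max v 0) \<tau>) \<in> borel_measurable (borel \<Otimes>\<^sub>M M)"
    and g_nonneg: "\<And>v \<tau>. v \<ge> 0 \<Longrightarrow> \<tau> \<in> space M \<Longrightarrow> g v \<tau> \<ge> 0"
    and g_cont: "\<And>\<tau>. \<tau> \<in> space M \<Longrightarrow> continuous_on {0..} (\<lambda>v. g v \<tau>)"
    and gd_pos: "\<And>\<tau>. \<tau> \<in> space M \<Longrightarrow> gd \<tau> > 0"
    and g_sub: "\<And>s \<tau>. s \<ge> 0 \<Longrightarrow> \<tau> \<in> space M \<Longrightarrow> g s \<tau> \<le> gd \<tau> * s"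
    and g_bdd: "\<And>v \<tau>. v \<ge> 0 \<Longrightarrow> \<tau> \<in> space M \<Longrightarrow> g v \<tau> \<le> B"
    and Bnn: "B \<ge> 0"
    and L_delta: "\<delta> > 0"
    and L_lin: "\<And>s \<tau>. 0 \<le> s \<Longrightarrow> s < \<delta> \<Longrightarrow> \<tau> \<in> space M \<Longrightarrow> g s \<tau> = gd \<tau> * s"
    and lam_pos: "0 < lam" and eps_pos: "eps > 0" and nu_def: "nu = lam + eps"
    and chi_lam_def: "chi_defined M K gd lam" and chi_nu_def: "chi_defined M K gd nu"
    and lam_zero: "chi M K gd lam = 0" and chi_nu: "chi M K gd nu > 0"
begin

abbreviation "P \<equiv> lborel \<Otimes>\<^sub>M M"

lemma psf: "pair_sigma_finite lborel M"
proof -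
  interpret finite_measure M by (rule finM)
  show ?thesis by unfold_locales
qed

interpretation pair_sigma_finite lborel M by (rule psf)

lemma space_P: "space P = UNIV \<times> space M"
  by (simp add: space_pair_measure)

lemma K_integrable: "\<tau> \<in> space M \<Longrightarrow> integrable lborel (\<lambda>s. K s \<tau>)"
  using K_pos[of \<tau>] not_integrable_integral_eq by force

lemma g_meas': 
  assumes psi: "psi \<in> borel_measurable borel" and nn: "\<And>s. psi s \<ge> 0"
  shows "(\<lambda>(s, \<tau>). g (psi s) \<tau>) \<in> borel_measurable P"
proof -
  have m: "(\<lambda>(s, \<tau>). (psi s, \<tau>)) \<in> measurable P (borel \<Otimes>\<^sub>M M)"
    using psi by (auto intro!: measurable_Pair simp: split_beta')
  have "(\<lambda>x. (\<lambda>(v, \<tau>). g (max v 0) \<tau>) ((\<lambda>(s, \<tau>). (psi s, \<tau>)) x)) \<in> borel_measurable P"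
    by (rule measurable_compose[OF m g_meas])
  moreover have "(\<lambda>x. (\<lambda>(v, \<tau>). g (max v 0) \<tau>) ((\<lambda>(s, \<tau>). (psi s, \<tau>)) x)) = (\<lambda>(s, \<tau>). g (psi s) \<tau>)"
  proof -
    have "\<And>s. max (psi s) 0 = psi s" using nn by (simp add: max_absorb1)
    then show ?thesis by (simp add: split_beta')
  qed
  ultimately show ?thesis by simp
qed

lemma GH_meas:
  assumes psi: "psi \<in> borel_measurable borel" and nn: "\<And>s. psi s \<ge> 0"
  shows "(\<lambda>(s, \<tau>). K s \<tau> * g (psi s) \<tau>) \<in> borel_measurable P"
  using borel_measurable_times[OF K_meas g_meas'[OF psi nn]] by (simp add: split_beta')

lemma GH_int:
  assumes psi: "psi \<in> borel_measurable borel" and nn: "\<And>s. psi s \<ge> 0"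
  shows "integrable P (\<lambda>(s, \<tau>). K s \<tau> * g (psi s) \<tau>)"
proof (rule Bochner_Integration.integrable_bound)
  show "integrable P (\<lambda>x. B * (\<lambda>(s, \<tau>). K s \<tau>) x)" using K_int by auto
  show "(\<lambda>(s, \<tau>). K s \<tau> * g (psi s) \<tau>) \<in> borel_measurable P" by (rule GH_meas[OF psi nn])
  show "AE x in P. norm ((\<lambda>(s, \<tau>). K s \<tau> * g (psi s) \<tau>) x) \<le> norm (B * (\<lambda>(s, \<tau>). K s \<tau>) x)"
  proof (rule AE_I2)
    fix x :: "real \<times> 'b" assume "x \<in> space P"
    then obtain s \<tau> where x: "x = (s, \<tau>)" "\<tau> \<in> space M" by (auto simp: space_P)
    have "K s \<tau> * g (psi s) \<tau> \<le> K s \<tau> * B"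
      using K_nonneg[OF x(2)] g_bdd[OF nn x(2)] by (intro mult_left_mono) auto
    then show "norm ((\<lambda>(s, \<tau>). K s \<tau> * g (psi s) \<tau>) x) \<le> norm (B * (\<lambda>(s, \<tau>). K s \<tau>) x)"
      using K_nonneg[OF x(2)] g_nonneg[OF nn x(2)] Bnn x by (simp add: mult.commute)
  qed
qed

lemma GH_iter:
  assumes psi: "psi \<in> borel_measurable borel" and nn: "\<And>s. psi s \<ge> 0"
  shows "(\<integral>\<tau>. (\<integral>s. K s \<tau> * g (psi s) \<tau> \<partial>lborel) \<partial>M) = (\<integral>x. (\<lambda>(s, \<tau>). K s \<tau> * g (psi s) \<tau>) x \<partial>P)"
  using integral_snd[of "\<lambda>s \<tau>. K s \<tau> * g (psi s) \<tau>"] GH_int[OF psi nn] by simp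

lemma Aop_eq:
  assumes phi: "continuous_on UNIV phi" and nn: "\<And>s. phi s \<ge> 0"
  shows "Aop M K g phi t = (\<integral>x. (\<lambda>(s, \<tau>). K s \<tau> * g (phi (t - s)) \<tau>) x \<partial>P)"
    and "integrable P (\<lambda>(s, \<tau>). K s \<tau> * g (phi (t - s)) \<tau>)"
proof -
  have m: "(\<lambda>s. phi (t - s)) \<in> borel_measurable borel"
    by (intro borel_measurable_continuous_onI continuous_on_compose2[OF phi]) (auto intro!: continuous_intros)
  show "Aop M K g phi t = (\<integral>x. (\<lambda>(s, \<tau>). K s \<tau> * g (phi (t - s)) \<tau>) x \<partial>P)"
    unfolding Aop_def using GH_iter[OF m nn] .
  show "integrable P (\<lambda>(s, \<tau>). K s \<tau> * g (phi (t - s)) \<tau>)"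
    using GH_int[OF m nn] .
qed

lemma chi_eq:
  assumes "chi_defined M K gd z"
  shows "chi M K gd z = 1 - (\<integral>x. (\<lambda>(s, \<tau>). K s \<tau> * gd \<tau> * exp (- s * z)) x \<partial>P)"
  using integral_snd[of "\<lambda>s \<tau>. K s \<tau> * gd \<tau> * exp (- s * z)"] assms
  unfolding chi_def chi_defined_def by simp

end

context sett
begin

definition w :: "real \<Rightarrow> real" where
  "w t = (if t \<le> 0 then exp (- (lam / 2) * t) else exp (- nu * t))"

lemma nu_pos: "nu > 0" using nu_def lam_pos eps_pos by simp

lemma w_pos: "w t > 0" by (simp add: w_def)

lemma w_exp_ge: "w t * exp (nu * \<bar>t\<bar>) \<ge> 1"
proof (cases "t \<le> 0")
  case True
  have "w t * exp (nu * \<bar>t\<bar>) = exp (- (lam/2) * t) * exp (nu * \<bar>t\<bar>)" using True by (simp add: w_def)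
  also have "\<dots> = exp (- (lam/2) * t + nu * \<bar>t\<bar>)" by (rule exp_add[symmetric])
  also have "\<dots> \<ge> 1" using True lam_pos nu_pos mult_nonneg_nonpos[of nu t] mult_nonneg_nonpos[of lam t] by simp
  finally show ?thesis .
next
  case False
  then show ?thesis by (simp add: w_def exp_minus field_simps)
qed

lemma w_le_exp: "1 / w t \<le> exp (nu * \<bar>t\<bar>)"
  using w_exp_ge[of t] w_pos[of t] by (simp add: field_simps)

lemma wb_iff:
  "(bdd_above ((\<lambda>s. exp (- (lam / 2) * s) * \<bar>h s\<bar>) ` {..0})
      \<and> bdd_above ((\<lambda>s. exp (- nu * s) * \<bar>h s\<bar>) ` {0..}))
   \<longleftrightarrow> (\<exists>C. \<forall>t. w t * \<bar>h t\<bar> \<le> C)"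
proof
  assume "bdd_above ((\<lambda>s. exp (- (lam / 2) * s) * \<bar>h s\<bar>) ` {..0})
      \<and> bdd_above ((\<lambda>s. exp (- nu * s) * \<bar>h s\<bar>) ` {0..})"
  then obtain C1 C2 where C1: "\<And>s. s \<le> 0 \<Longrightarrow> exp (- (lam / 2) * s) * \<bar>h s\<bar> \<le> C1"
    and C2: "\<And>s. s \<ge> 0 \<Longrightarrow> exp (- nu * s) * \<bar>h s\<bar> \<le> C2"
    by (auto simp: bdd_above_def)
  show "\<exists>C. \<forall>t. w t * \<bar>h t\<bar> \<le> C"
  proof (intro exI allI)
    fix t show "w t * \<bar>h t\<bar> \<le> max C1 C2"
      using C1[of t] C2[of t] by (cases "t \<le> 0") (auto simp: w_def)
  qed
next
  assume "\<exists>C. \<forall>t. w t * \<bar>h t\<bar> \<le> C"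
  then obtain C where C: "\<And>t. w t * \<bar>h t\<bar> \<le> C" by auto
  have 1: "exp (- (lam / 2) * s) * \<bar>h s\<bar> \<le> C" if "s \<le> 0" for s using C[of s] that by (simp add: w_def)
  have 2: "exp (- nu * s) * \<bar>h s\<bar> \<le> C" if "s \<ge> 0" for s
  proof (cases "s = 0")
    case True then show ?thesis using C[of s] by (simp add: w_def)
  next
    case False then show ?thesis using C[of s] that by (simp add: w_def)
  qed
  show "bdd_above ((\<lambda>s. exp (- (lam / 2) * s) * \<bar>h s\<bar>) ` {..0})
      \<and> bdd_above ((\<lambda>s. exp (- nu * s) * \<bar>h s\<bar>) ` {0..})"
    using 1 2 by (auto simp: bdd_above_def intro!: exI[of _ C])
qed

definition wb :: "(real \<Rightarrow> real) \<Rightarrow> bool" where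
  "wb h \<longleftrightarrow> (\<exists>C. \<forall>t. w t * \<bar>h t\<bar> \<le> C)"

lemma Xsp_iff: "h \<in> Xsp lam nu \<longleftrightarrow> continuous_on UNIV h \<and> wb h"
  unfolding Xsp_def wb_def using wb_iff[of h] by auto

lemma wnorm_ge:
  assumes "wb h"
  shows "w t * \<bar>h t\<bar> \<le> wnorm lam nu h" and "wnorm lam nu h \<ge> 0"
proof -
  have bd: "bdd_above ((\<lambda>s. exp (- (lam / 2) * s) * \<bar>h s\<bar>) ` {..0})"
      "bdd_above ((\<lambda>s. exp (- nu * s) * \<bar>h s\<bar>) ` {0..})"
    using assms wb_iff[of h] unfolding wb_def by auto
  have u1: "exp (- (lam / 2) * s) * \<bar>h s\<bar> \<le> (SUP s\<in>{..0}. exp (- (lam / 2) * s) * \<bar>h s\<bar>)" if "s \<le> 0" for s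
    using that bd(1) by (intro cSUP_upper) auto
  have u2: "exp (- nu * s) * \<bar>h s\<bar> \<le> (SUP s\<in>{0..}. exp (- nu * s) * \<bar>h s\<bar>)" if "s \<ge> 0" for s
    using that bd(2) by (intro cSUP_upper) auto
  have p1: "(SUP s\<in>{..0}. exp (- (lam / 2) * s) * \<bar>h s\<bar>) \<ge> 0"
    using u1[of 0] by simp
  have p2: "(SUP s\<in>{0..}. exp (- nu * s) * \<bar>h s\<bar>) \<ge> 0"
    using u2[of 0] by simp
  show "w t * \<bar>h t\<bar> \<le> wnorm lam nu h"
    using u1[of t] u2[of t] p1 p2 by (cases "t \<le> 0") (auto simp: w_def wnorm_def)
  show "wnorm lam nu h \<ge> 0" using p1 p2 by (simp add: wnorm_def)
qed

lemma wnorm_le: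
  assumes C: "\<And>t. w t * \<bar>h t\<bar> \<le> C"
  shows "wnorm lam nu h \<le> 2 * C"
proof -
  have "(SUP s\<in>{..0}. exp (- (lam / 2) * s) * \<bar>h s\<bar>) \<le> C"
  proof (rule cSUP_least)
    fix s :: real assume s: "s \<in> {..0}"
    then show "exp (- (lam / 2) * s) * \<bar>h s\<bar> \<le> C" using C[of s] by (simp add: w_def)
  qed auto
  moreover have "(SUP s\<in>{0..}. exp (- nu * s) * \<bar>h s\<bar>) \<le> C"
  proof (rule cSUP_least)
    fix s :: real assume s: "s \<in> {0..}"
    show "exp (- nu * s) * \<bar>h s\<bar> \<le> C"
    proof (cases "s = 0")
      case True then show ?thesis using C[of s] by (simp add: w_def)
    next
      case False then show ?thesis using C[of s] s by (simp add: w_def)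
    qed
  qed auto
  ultimately show ?thesis by (simp add: wnorm_def)
qed

lemma pt_bound:
  assumes "wb h"
  shows "\<bar>h t\<bar> \<le> wnorm lam nu h * exp (nu * \<bar>t\<bar>)"
proof -
  have "\<bar>h t\<bar> = (w t * \<bar>h t\<bar>) * (1 / w t)" using w_pos[of t] by simp
  also have "\<dots> \<le> wnorm lam nu h * exp (nu * \<bar>t\<bar>)"
    using wnorm_ge[OF assms] w_le_exp[of t] w_pos[of t]
    by (intro mult_mono) auto
  finally show ?thesis .
qed

lemma UWC:
  assumes "\<And>n. wb (h n)"
  shows "(\<lambda>n. wnorm lam nu (h n)) \<longlonglongrightarrow> 0 \<longleftrightarrow> (\<forall>e>0. \<exists>N. \<forall>n\<ge>N. \<forall>t. w t * \<bar>h n t\<bar> \<le> e)"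
proof
  assume L: "(\<lambda>n. wnorm lam nu (h n)) \<longlonglongrightarrow> 0"
  show "\<forall>e>0. \<exists>N. \<forall>n\<ge>N. \<forall>t. w t * \<bar>h n t\<bar> \<le> e"
  proof (intro allI impI)
    fix e :: real assume e: "e > 0"
    obtain N where N: "\<And>n. n \<ge> N \<Longrightarrow> \<bar>wnorm lam nu (h n) - 0\<bar> < e"
      using LIMSEQ_D[OF L e] by auto
    show "\<exists>N. \<forall>n\<ge>N. \<forall>t. w t * \<bar>h n t\<bar> \<le> e"
      using N wnorm_ge[OF assms] by (intro exI[of _ N]) (smt (verit))
  qed
next
  assume R: "\<forall>e>0. \<exists>N. \<forall>n\<ge>N. \<forall>t. w t * \<bar>h n t\<bar> \<le> e"
  show "(\<lambda>n. wnorm lam nu (h n)) \<longlonglongrightarrow> 0"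
  proof (rule LIMSEQ_I)
    fix r :: real assume r: "r > 0"
    obtain N where N: "\<And>n t. n \<ge> N \<Longrightarrow> w t * \<bar>h n t\<bar> \<le> r / 3"
      using R r by (meson divide_pos_pos zero_less_numeral)
    show "\<exists>N. \<forall>n\<ge>N. norm (wnorm lam nu (h n) - 0) < r"
    proof (intro exI allI impI)
      fix n assume "n \<ge> N"
      then have "wnorm lam nu (h n) \<le> 2 * (r/3)" by (intro wnorm_le) (use N in auto)
      then show "norm (wnorm lam nu (h n) - 0) < r" using wnorm_ge(2)[OF assms[of n]] r by simp
    qed
  qed
qed

lemma phi_minus_nn: "phi_minus \<delta> lam eps t \<ge> 0"
  using L_delta eps_pos by (auto simp: phi_minus_def mult_nonneg_nonpos intro!: mult_nonneg_nonneg)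

lemma w_exp_le: "w t * exp (lam * t) \<le> 1"
proof (cases "t \<le> 0")
  case True
  have "w t * exp (lam * t) = exp (- (lam/2) * t) * exp (lam * t)" using True by (simp add: w_def)
  also have "\<dots> = exp (- (lam/2) * t + lam * t)" by (rule exp_add[symmetric])
  also have "\<dots> = exp ((lam/2) * t)" by (simp add: algebra_simps)
  also have "\<dots> \<le> 1" using True lam_pos by (simp add: mult_nonneg_nonpos)
  finally show ?thesis .
next
  case False
  have "w t * exp (lam * t) = exp (- nu * t) * exp (lam * t)" using False by (simp add: w_def)
  also have "\<dots> = exp (- nu * t + lam * t)" by (rule exp_add[symmetric])
  also have "\<dots> = exp (- eps * t)" by (simp add: nu_def algebra_simps)
  also have "\<dots> \<le> 1" using False eps_pos by simp
  finally show ?thesis .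
qed

lemma bounds_wb:
  assumes "\<And>t. phi_minus \<delta> lam eps t \<le> f t \<and> f t \<le> phi_plus \<delta> lam t"
  shows "w t * \<bar>f t\<bar> \<le> \<delta>"
proof -
  have "\<bar>f t\<bar> \<le> \<delta> * exp (lam * t)" using assms[of t] phi_minus_nn[of t] by (simp add: phi_plus_def)
  then have "w t * \<bar>f t\<bar> \<le> w t * (\<delta> * exp (lam * t))" using w_pos[of t] by simp
  also have "\<dots> = \<delta> * (w t * exp (lam * t))" by simp
  also have "\<dots> \<le> \<delta>" using w_exp_le[of t] L_delta by (simp add: mult_left_le)
  finally show ?thesis .
qed

lemma Kset_iff: "f \<in> Kset \<delta> lam eps nu \<longleftrightarrow> continuous_on UNIV f \<and> (\<forall>t. phi_minus \<delta> lam eps t \<le> f t \<and> f t \<le> phi_plus \<delta> lam t)"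
  unfolding Kset_def Xsp_iff wb_def using bounds_wb by blast

lemma Kset_nn: "f \<in> Kset \<delta> lam eps nu \<Longrightarrow> f t \<ge> 0"
  using phi_minus_nn[of t] by (auto simp: Kset_iff intro: order_trans)

lemma Kset_wb: "f \<in> Kset \<delta> lam eps nu \<Longrightarrow> wb f"
  using Kset_iff wb_def bounds_wb by blast

lemma wb_diff: "wb f \<Longrightarrow> wb g' \<Longrightarrow> wb (\<lambda>t. f t - g' t)"
proof -
  assume "wb f" "wb g'"
  then obtain C1 C2 where "\<And>t. w t * \<bar>f t\<bar> \<le> C1" "\<And>t. w t * \<bar>g' t\<bar> \<le> C2" by (auto simp: wb_def)
  then have "w t * \<bar>f t - g' t\<bar> \<le> C1 + C2" for t
    using w_pos[of t] abs_triangle_ineq4[of "f t" "g' t"]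
    by (smt (verit, best) mult_left_mono distrib_left)
  then show ?thesis by (auto simp: wb_def)
qed

end

context sett
begin

lemma complete_X:
  assumes f: "\<forall>n. f n \<in> Xsp lam nu"
    and C: "\<forall>e>0. \<exists>N. \<forall>m\<ge>N. \<forall>n\<ge>N. wnorm lam nu (\<lambda>t. f m t - f n t) < e"
  shows "\<exists>\<phi>\<in>Xsp lam nu. (\<lambda>n. wnorm lam nu (\<lambda>t. f n t - \<phi> t)) \<longlonglongrightarrow> 0"
proof -
  have wbf: "wb (f n)" for n using f by (simp add: Xsp_iff)
  have wbd: "wb (\<lambda>t. f m t - f n t)" for m n using wb_diff[OF wbf wbf] .
  have cont: "continuous_on UNIV (f n)" for n using f by (simp add: Xsp_iff)
  have Cw: "\<exists>N. \<forall>m\<ge>N. \<forall>n\<ge>N. \<forall>t. w t * \<bar>f m t - f n t\<bar> < e" if e: "e > 0" for e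
  proof -
    obtain N where N: "\<And>m n. m \<ge> N \<Longrightarrow> n \<ge> N \<Longrightarrow> wnorm lam nu (\<lambda>t. f m t - f n t) < e"
      using C e by blast
    show ?thesis using N wnorm_ge(1)[OF wbd] by (meson order_le_less_trans)
  qed
  have cauchy: "Cauchy (\<lambda>n. f n t)" for t
  proof (rule CauchyI)
    fix e :: real assume e: "e > 0"
    have ew: "e * w t > 0" using e w_pos[of t] by simp
    obtain N where N: "\<And>m n. m \<ge> N \<Longrightarrow> n \<ge> N \<Longrightarrow> w t * \<bar>f m t - f n t\<bar> < e * w t"
      using Cw[OF ew] by blast
    show "\<exists>M. \<forall>m\<ge>M. \<forall>n\<ge>M. norm (f m t - f n t) < e"
    proof (intro exI allI impI)
      fix m n assume "m \<ge> N" "n \<ge> N"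
      then have "w t * \<bar>f m t - f n t\<bar> < w t * e" using N[of m n] by (simp add: mult.commute)
      then show "norm (f m t - f n t) < e" using w_pos[of t] by simp
    qed
  qed
  define \<phi> where "\<phi> t = lim (\<lambda>n. f n t)" for t
  have lim: "(\<lambda>n. f n t) \<longlonglongrightarrow> \<phi> t" for t
    using cauchy[of t] unfolding \<phi>_def by (simp add: Cauchy_convergent_iff convergent_LIMSEQ_iff)
  have U: "\<exists>N. \<forall>n\<ge>N. \<forall>t. w t * \<bar>f n t - \<phi> t\<bar> \<le> e" if e: "e > 0" for e
  proof -
    obtain N where N: "\<And>m n t. m \<ge> N \<Longrightarrow> n \<ge> N \<Longrightarrow> w t * \<bar>f m t - f n t\<bar> < e"
      using Cw[OF e] by blast
    show ?thesis
    proof (intro exI allI impI)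
      fix n t assume n: "n \<ge> N"
      have "(\<lambda>m. w t * \<bar>f n t - f m t\<bar>) \<longlonglongrightarrow> w t * \<bar>f n t - \<phi> t\<bar>"
        by (intro tendsto_intros lim)
      moreover have "\<forall>m\<ge>N. w t * \<bar>f n t - f m t\<bar> \<le> e" using N n by (meson less_imp_le)
      ultimately show "w t * \<bar>f n t - \<phi> t\<bar> \<le> e"
        by (intro LIMSEQ_le_const2[where X="\<lambda>m. w t * \<bar>f n t - f m t\<bar>"]) auto
    qed
  qed
  have contphi: "continuous_on UNIV \<phi>"
  proof (rule continuous_at_imp_continuous_on, rule ballI)
    fix t0 :: real
    let ?S = "{t0 - 1<..<t0 + 1}"
    have "continuous_on ?S \<phi>"
    proof (rule uniform_limit_theorem[where F=sequentially])
      show "\<forall>\<^sub>F n in sequentially. continuous_on ?S (f n)"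
        by (intro always_eventually allI continuous_on_subset[OF cont]) auto
      show "uniform_limit ?S f \<phi> sequentially"
        unfolding uniform_limit_sequentially_iff
      proof (intro allI impI)
        fix e :: real assume e: "e > 0"
        define c where "c = exp (nu * (\<bar>t0\<bar> + 1))"
        have c: "c > 0" by (simp add: c_def)
        obtain N where N: "\<And>n t. n \<ge> N \<Longrightarrow> w t * \<bar>f n t - \<phi> t\<bar> \<le> e / (2 * c)"
          using U[of "e / (2*c)"] e c by auto
        show "\<exists>N. \<forall>n\<ge>N. \<forall>x\<in>?S. dist (f n x) (\<phi> x) < e"
        proof (intro exI allI impI ballI)
          fix n x assume n: "n \<ge> N" and x: "x \<in> ?S"
          have "\<bar>f n x - \<phi> x\<bar> = (w x * \<bar>f n x - \<phi> x\<bar>) * (1 / w x)" using w_pos[of x] by simp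
          also have "\<dots> \<le> (e / (2 * c)) * exp (nu * \<bar>x\<bar>)"
            using N[OF n, of x] w_le_exp[of x] w_pos[of x] e c by (intro mult_mono) auto
          also have "exp (nu * \<bar>x\<bar>) \<le> c"
            unfolding c_def using x nu_pos by (auto intro!: mult_left_mono)
          then have "(e / (2 * c)) * exp (nu * \<bar>x\<bar>) \<le> (e / (2 * c)) * c"
            using e c by (intro mult_left_mono) auto
          also have "\<dots> < e" using e c by simp
          finally show "dist (f n x) (\<phi> x) < e" by (simp add: dist_real_def)
        qed
      qed
    qed auto
    then show "isCont \<phi> t0"
      by (rule continuous_on_interior) (auto simp: interior_open)
  qed
  have wbphi: "wb \<phi>"
  proof -
    obtain N where N: "\<And>n t. n \<ge> N \<Longrightarrow> w t * \<bar>f n t - \<phi> t\<bar> \<le> 1" using U[of 1] by auto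
    obtain C where C: "\<And>t. w t * \<bar>f N t\<bar> \<le> C" using wbf[of N] by (auto simp: wb_def)
    have "w t * \<bar>\<phi> t\<bar> \<le> 1 + C" for t
    proof -
      have "w t * \<bar>\<phi> t\<bar> \<le> w t * (\<bar>f N t - \<phi> t\<bar> + \<bar>f N t\<bar>)"
        using w_pos[of t] by (intro mult_left_mono) auto
      then show ?thesis using N[of N t] C[of t] by (simp add: distrib_left)
    qed
    then show ?thesis by (auto simp: wb_def)
  qed
  show ?thesis
  proof (intro bexI)
    show "\<phi> \<in> Xsp lam nu" using contphi wbphi by (simp add: Xsp_iff)
    show "(\<lambda>n. wnorm lam nu (\<lambda>t. f n t - \<phi> t)) \<longlonglongrightarrow> 0"
      using U by (subst UWC) (auto intro: wb_diff wbf wbphi)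
  qed
qed

lemma closed_K:
  assumes f: "\<forall>n. f n \<in> Kset \<delta> lam eps nu" and phi: "\<phi> \<in> Xsp lam nu"
    and L: "(\<lambda>n. wnorm lam nu (\<lambda>t. f n t - \<phi> t)) \<longlonglongrightarrow> 0"
  shows "\<phi> \<in> Kset \<delta> lam eps nu"
proof -
  have wbd: "wb (\<lambda>t. f n t - \<phi> t)" for n
    using f phi Kset_wb by (intro wb_diff) (auto simp: Xsp_iff)
  have pt: "(\<lambda>n. f n t) \<longlonglongrightarrow> \<phi> t" for t
  proof -
    have "(\<lambda>n. wnorm lam nu (\<lambda>t. f n t - \<phi> t) * exp (nu * \<bar>t\<bar>)) \<longlonglongrightarrow> 0 * exp (nu * \<bar>t\<bar>)"
      by (intro tendsto_intros L)
    then have "(\<lambda>n. wnorm lam nu (\<lambda>t. f n t - \<phi> t) * exp (nu * \<bar>t\<bar>)) \<longlonglongrightarrow> 0" by simp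
    then have "(\<lambda>n. f n t - \<phi> t) \<longlonglongrightarrow> 0"
      by (rule Lim_null_comparison[rotated]) (use pt_bound[OF wbd] in \<open>auto intro!: always_eventually\<close>)
    then show ?thesis by (simp add: LIM_zero_iff)
  qed
  have bnd: "phi_minus \<delta> lam eps t \<le> \<phi> t \<and> \<phi> t \<le> phi_plus \<delta> lam t" for t
  proof
    show "phi_minus \<delta> lam eps t \<le> \<phi> t"
      using f by (intro LIMSEQ_le_const[OF pt]) (auto simp: Kset_iff)
    show "\<phi> t \<le> phi_plus \<delta> lam t"
      using f by (intro LIMSEQ_le_const2[OF pt]) (auto simp: Kset_iff)
  qed
  show ?thesis using phi bnd unfolding Kset_iff Xsp_iff by blast
qed

lemma bounded_K: "\<exists>B. \<forall>\<phi>\<in>Kset \<delta> lam eps nu. wnorm lam nu \<phi> \<le> B"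
  using wnorm_le bounds_wb by (auto simp: Kset_iff intro!: exI[of _ "2 * \<delta>"])

lemma convex_K:
  assumes "\<phi> \<in> Kset \<delta> lam eps nu" "\<psi> \<in> Kset \<delta> lam eps nu" "a \<in> {0..1::real}"
  shows "(\<lambda>t. a * \<phi> t + (1 - a) * \<psi> t) \<in> Kset \<delta> lam eps nu"
proof -
  have c: "continuous_on UNIV \<phi>" "continuous_on UNIV \<psi>" using assms by (auto simp: Kset_iff)
  have b: "\<And>t. phi_minus \<delta> lam eps t \<le> \<phi> t \<and> \<phi> t \<le> phi_plus \<delta> lam t"
    "\<And>t. phi_minus \<delta> lam eps t \<le> \<psi> t \<and> \<psi> t \<le> phi_plus \<delta> lam t" using assms by (auto simp: Kset_iff)
  have a: "0 \<le> a" "a \<le> 1" using assms by auto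
  show ?thesis unfolding Kset_iff
  proof (intro conjI allI)
    show "continuous_on UNIV (\<lambda>t. a * \<phi> t + (1 - a) * \<psi> t)" using c by (intro continuous_intros)
    fix t
    have 1: "a * (\<phi> t - phi_minus \<delta> lam eps t) \<ge> 0" "(1 - a) * (\<psi> t - phi_minus \<delta> lam eps t) \<ge> 0"
      "a * (phi_plus \<delta> lam t - \<phi> t) \<ge> 0" "(1 - a) * (phi_plus \<delta> lam t - \<psi> t) \<ge> 0"
      using a b[of t] by auto
    show "phi_minus \<delta> lam eps t \<le> a * \<phi> t + (1 - a) * \<psi> t"
      using 1 by (simp add: algebra_simps)
    show "a * \<phi> t + (1 - a) * \<psi> t \<le> phi_plus \<delta> lam t"
      using 1 by (simp add: algebra_simps)
  qed
qed

end

context sett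
begin

interpretation pair_sigma_finite lborel M by (rule psf)

lemma DCT_P:
  assumes Fn: "\<And>n. Fn n \<in> borel_measurable P" and F: "F \<in> borel_measurable P"
    and lim: "\<And>x. x \<in> space P \<Longrightarrow> (\<lambda>n. Fn n x) \<longlonglongrightarrow> F x"
    and bd: "\<And>n x. x \<in> space P \<Longrightarrow> \<bar>Fn n x\<bar> \<le> C * (\<lambda>(s, \<tau>). K s \<tau>) x"
  shows "(\<lambda>n. \<integral>x. Fn n x \<partial>P) \<longlonglongrightarrow> (\<integral>x. F x \<partial>P)"
proof (rule Bochner_Integration.integral_dominated_convergence[where w="\<lambda>x. C * (\<lambda>(s, \<tau>). K s \<tau>) x"])
  show "integrable P (\<lambda>x. C * (\<lambda>(s, \<tau>). K s \<tau>) x)" using K_int by auto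
  show "AE x in P. (\<lambda>n. Fn n x) \<longlonglongrightarrow> F x" using lim by (auto intro!: AE_I2)
  show "\<And>n. AE x in P. norm (Fn n x) \<le> C * (\<lambda>(s, \<tau>). K s \<tau>) x" using bd by (auto intro!: AE_I2)
qed (use Fn F in auto)

lemma g_tendsto:
  assumes tau: "\<tau> \<in> space M" and X: "(X \<longlongrightarrow> l) F" and nn: "\<forall>\<^sub>F n in F. X n \<ge> 0" and l: "l \<ge> 0"
  shows "((\<lambda>n. g (X n) \<tau>) \<longlongrightarrow> g l \<tau>) F"
  by (rule continuous_on_tendsto_compose[OF g_cont[OF tau] X]) (use nn l in auto)

lemma Aop_cont:
  assumes phi: "phi \<in> Kset \<delta> lam eps nu"
  shows "continuous_on UNIV (Aop M K g phi)"
proof -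
  have pc: "continuous_on UNIV phi" and nn: "\<And>s. phi s \<ge> 0"
    using phi Kset_nn by (auto simp: Kset_iff)
  have mphi: "(\<lambda>s. phi (t - s)) \<in> borel_measurable borel" for t
    by (intro borel_measurable_continuous_onI continuous_on_compose2[OF pc]) (auto intro!: continuous_intros)
  have "isCont (Aop M K g phi) t0" for t0
  proof (rule continuous_at_sequentiallyI)
    fix u assume u: "u \<longlonglongrightarrow> t0"
    have "(\<lambda>n. \<integral>x. (\<lambda>(s, \<tau>). K s \<tau> * g (phi (u n - s)) \<tau>) x \<partial>P)
        \<longlonglongrightarrow> (\<integral>x. (\<lambda>(s, \<tau>). K s \<tau> * g (phi (t0 - s)) \<tau>) x \<partial>P)"
    proof (rule DCT_P[where C=B])
      show "(\<lambda>(s, \<tau>). K s \<tau> * g (phi (u n - s)) \<tau>) \<in> borel_measurable P" for n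
        using GH_meas[OF mphi nn] .
      show "(\<lambda>(s, \<tau>). K s \<tau> * g (phi (t0 - s)) \<tau>) \<in> borel_measurable P"
        using GH_meas[OF mphi nn] .
      fix x :: "real \<times> 'b" assume x: "x \<in> space P"
      then obtain s \<tau> where st: "x = (s, \<tau>)" "\<tau> \<in> space M" by (auto simp: space_P)
      have "(\<lambda>n. phi (u n - s)) \<longlonglongrightarrow> phi (t0 - s)"
        by (rule continuous_on_tendsto_compose[OF pc]) (auto intro!: tendsto_intros u)
      then have "(\<lambda>n. g (phi (u n - s)) \<tau>) \<longlonglongrightarrow> g (phi (t0 - s)) \<tau>"
        using nn by (intro g_tendsto st(2)) auto
      then show "(\<lambda>n. (\<lambda>(s, \<tau>). K s \<tau> * g (phi (u n - s)) \<tau>) x) \<longlonglongrightarrow> (\<lambda>(s, \<tau>). K s \<tau> * g (phi (t0 - s)) \<tau>) x"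
        unfolding st by (auto intro!: tendsto_intros)
      fix n
      show "\<bar>(\<lambda>(s, \<tau>). K s \<tau> * g (phi (u n - s)) \<tau>) x\<bar> \<le> B * (\<lambda>(s, \<tau>). K s \<tau>) x"
      proof -
        have "K s \<tau> * g (phi (u n - s)) \<tau> \<le> K s \<tau> * B"
          by (rule mult_left_mono[OF g_bdd[OF nn st(2)] K_nonneg[OF st(2)]])
        moreover have "0 \<le> K s \<tau> * g (phi (u n - s)) \<tau>"
          by (rule mult_nonneg_nonneg[OF K_nonneg[OF st(2)] g_nonneg[OF nn st(2)]])
        ultimately show ?thesis unfolding st by (simp add: mult.commute)
      qed
    qed
    then show "(\<lambda>n. Aop M K g phi (u n)) \<longlonglongrightarrow> Aop M K g phi t0"
      using Aop_eq(1)[OF pc nn] by simp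
  qed
  then show ?thesis by (simp add: continuous_at_imp_continuous_on)
qed

lemma chi_int:
  assumes "chi_defined M K gd z"
  shows "integrable P (\<lambda>(s, \<tau>). K s \<tau> * gd \<tau> * exp (- s * z))"
  using assms by (simp add: chi_defined_def)

lemma Aop_bounds:
  assumes phi: "phi \<in> Kset \<delta> lam eps nu"
  shows "phi_minus \<delta> lam eps t \<le> Aop M K g phi t \<and> Aop M K g phi t \<le> phi_plus \<delta> lam t"
proof -
  have pc: "continuous_on UNIV phi" and nn: "\<And>s. phi s \<ge> 0"
    and bd: "\<And>t. phi_minus \<delta> lam eps t \<le> phi t \<and> phi t \<le> phi_plus \<delta> lam t"
    using phi Kset_nn by (auto simp: Kset_iff)
  note AE = Aop_eq[OF pc nn, of t]
  let ?H = "\<lambda>(s, \<tau>). K s \<tau> * g (phi (t - s)) \<tau>"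
  let ?L = "\<lambda>z. (\<lambda>(s, \<tau>). K s \<tau> * gd \<tau> * exp (- s * z))"
  have il: "integrable P (?L lam)" "integrable P (?L nu)" using chi_int chi_lam_def chi_nu_def by auto
  have IL: "(\<integral>x. ?L lam x \<partial>P) = 1" "(\<integral>x. ?L nu x \<partial>P) = 1 - chi M K gd nu"
    using chi_eq[OF chi_lam_def] chi_eq[OF chi_nu_def] lam_zero by auto
  have upper: "Aop M K g phi t \<le> phi_plus \<delta> lam t"
  proof -
    have "Aop M K g phi t \<le> (\<integral>x. \<delta> * exp (lam * t) * ?L lam x \<partial>P)"
      unfolding AE(1)
    proof (rule integral_mono)
      show "integrable P ?H" by (rule AE(2))
      show "integrable P (\<lambda>x. \<delta> * exp (lam * t) * ?L lam x)" using il by auto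
      fix x :: "real \<times> 'b" assume x: "x \<in> space P"
      then obtain s \<tau> where st: "x = (s, \<tau>)" "\<tau> \<in> space M" by (auto simp: space_P)
      have "g (phi (t - s)) \<tau> \<le> gd \<tau> * phi (t - s)" by (rule g_sub[OF nn st(2)])
      also have "\<dots> \<le> gd \<tau> * (\<delta> * exp (lam * (t - s)))"
        using bd[of "t - s"] gd_pos[OF st(2)] by (intro mult_left_mono) (auto simp: phi_plus_def)
      also have "exp (lam * (t - s)) = exp (lam * t) * exp (- s * lam)"
        by (simp add: exp_add[symmetric] algebra_simps)
      finally have "g (phi (t - s)) \<tau> \<le> \<delta> * exp (lam * t) * (gd \<tau> * exp (- s * lam))" by (simp add: algebra_simps)
      then have "K s \<tau> * g (phi (t - s)) \<tau> \<le> K s \<tau> * (\<delta> * exp (lam * t) * (gd \<tau> * exp (- s * lam)))"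
        by (rule mult_left_mono[OF _ K_nonneg[OF st(2)]])
      then show "?H x \<le> \<delta> * exp (lam * t) * ?L lam x" unfolding st by (simp add: algebra_simps)
    qed
    also have "\<dots> = \<delta> * exp (lam * t)" using IL(1) by simp
    finally show ?thesis by (simp add: phi_plus_def)
  qed
  have lower: "phi_minus \<delta> lam eps t \<le> Aop M K g phi t"
  proof (cases "t \<le> 0")
    case False
    have "0 \<le> Aop M K g phi t" unfolding AE(1)
      by (rule integral_nonneg_AE, rule AE_I2)
        (auto simp: space_P intro!: mult_nonneg_nonneg K_nonneg g_nonneg nn)
    then show ?thesis using False by (simp add: phi_minus_def)
  next
    case True
    have "(\<integral>x. \<delta> * exp (lam * t) * ?L lam x - \<delta> * exp (nu * t) * ?L nu x \<partial>P) \<le> Aop M K g phi t"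
      unfolding AE(1)
    proof (rule integral_mono)
      show "integrable P ?H" by (rule AE(2))
      show "integrable P (\<lambda>x. \<delta> * exp (lam * t) * ?L lam x - \<delta> * exp (nu * t) * ?L nu x)" using il by auto
      fix x :: "real \<times> 'b" assume x: "x \<in> space P"
      then obtain s \<tau> where st: "x = (s, \<tau>)" "\<tau> \<in> space M" by (auto simp: space_P)
      define u where "u = t - s"
      have key: "gd \<tau> * (\<delta> * exp (lam * u) - \<delta> * exp (nu * u)) \<le> g (phi u) \<tau>"
      proof (cases "u < 0")
        case True
        have "phi u \<le> \<delta> * exp (lam * u)" using bd[of u] by (simp add: phi_plus_def)
        also have "\<dots> < \<delta>" using True lam_pos L_delta by (simp add: mult_pos_neg)
        finally have "g (phi u) \<tau> = gd \<tau> * phi u" using L_lin[OF nn _ st(2)] by simp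
        moreover have "\<delta> * exp (lam * u) - \<delta> * exp (nu * u) \<le> phi u"
        proof -
          have e: "exp (nu * u) = exp (lam * u) * exp (eps * u)"
            by (simp add: nu_def exp_add[symmetric] algebra_simps)
          have "phi_minus \<delta> lam eps u \<le> phi u" using bd[of u] by simp
          then show ?thesis using True unfolding e by (simp add: phi_minus_def algebra_simps)
        qed
        ultimately show ?thesis using gd_pos[OF st(2)] by (simp add: mult_left_mono)
      next
        case False
        have "exp (lam * u) \<le> exp (nu * u)" using False nu_def eps_pos by (simp add: mult_right_mono)
        then have "gd \<tau> * (\<delta> * exp (lam * u) - \<delta> * exp (nu * u)) \<le> 0"
          using gd_pos[OF st(2)] L_delta by (simp add: mult_nonneg_nonpos)
        also have "0 \<le> g (phi u) \<tau>" using g_nonneg[OF nn st(2)] .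
        finally show ?thesis .
      qed
      have e1: "exp (lam * u) = exp (lam * t) * exp (- s * lam)" "exp (nu * u) = exp (nu * t) * exp (- s * nu)"
        unfolding u_def by (simp_all add: exp_add[symmetric] algebra_simps)
      have "K s \<tau> * (gd \<tau> * (\<delta> * exp (lam * u) - \<delta> * exp (nu * u))) \<le> K s \<tau> * g (phi u) \<tau>"
        by (rule mult_left_mono[OF key K_nonneg[OF st(2)]])
      then show "\<delta> * exp (lam * t) * ?L lam x - \<delta> * exp (nu * t) * ?L nu x \<le> ?H x"
        unfolding st using e1 by (simp add: u_def algebra_simps)
    qed
    also have "(\<integral>x. \<delta> * exp (lam * t) * ?L lam x - \<delta> * exp (nu * t) * ?L nu x \<partial>P)
        = \<delta> * exp (lam * t) - \<delta> * exp (nu * t) * (1 - chi M K gd nu)"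
      using il IL by simp
    finally have "\<delta> * exp (lam * t) - \<delta> * exp (nu * t) * (1 - chi M K gd nu) \<le> Aop M K g phi t" .
    moreover have "\<delta> * exp (nu * t) * (1 - chi M K gd nu) \<le> \<delta> * exp (nu * t)"
      using chi_nu L_delta by simp
    moreover have "\<delta> * exp (nu * t) = \<delta> * exp (lam * t) * exp (eps * t)"
      by (simp add: nu_def exp_add[symmetric] algebra_simps)
    ultimately show ?thesis using True by (simp add: phi_minus_def algebra_simps)
  qed
  show ?thesis using upper lower by simp
qed

lemma Aop_K: "phi \<in> Kset \<delta> lam eps nu \<Longrightarrow> Aop M K g phi \<in> Kset \<delta> lam eps nu"
  using Aop_cont Aop_bounds by (simp add: Kset_iff)

end

lemma unif_from_seq:
  fixes D :: "nat \<Rightarrow> real \<Rightarrow> real" and S :: "real set"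
  assumes S: "compact S" and e: "e > 0"
    and H: "\<And>r t l. strict_mono r \<Longrightarrow> (\<forall>k. t k \<in> S) \<Longrightarrow> t \<longlonglongrightarrow> l \<Longrightarrow> l \<in> S
              \<Longrightarrow> (\<lambda>k. D (r k) (t k)) \<longlonglongrightarrow> 0"
  shows "\<exists>N. \<forall>n\<ge>N. \<forall>t\<in>S. \<bar>D n t\<bar> < e"
proof (rule ccontr)
  assume "\<not> ?thesis"
  then have unb: "\<forall>N. \<exists>n\<ge>N. \<exists>t\<in>S. e \<le> \<bar>D n t\<bar>" by (auto simp: not_less)
  define Q where "Q = {n. \<exists>t\<in>S. e \<le> \<bar>D n t\<bar>}"
  have inf: "infinite Q" using unb unfolding Q_def infinite_nat_iff_unbounded_le by auto
  define r where "r = enumerate Q"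
  have r: "strict_mono r" using strict_mono_enumerate[OF inf] r_def by simp
  have "\<forall>k. \<exists>t\<in>S. e \<le> \<bar>D (r k) t\<bar>" using enumerate_in_set[OF inf] unfolding r_def Q_def by auto
  then obtain t where t: "\<And>k. t k \<in> S" "\<And>k. e \<le> \<bar>D (r k) (t k)\<bar>" by metis
  obtain l q where lq: "l \<in> S" "strict_mono q" "(t \<circ> q) \<longlonglongrightarrow> l"
    using seq_compactE[OF compact_imp_seq_compact[OF S], of t] t(1) by blast
  have "(\<lambda>k. D ((r \<circ> q) k) ((t \<circ> q) k)) \<longlonglongrightarrow> 0"
    by (rule H) (use lq t(1) strict_mono_o[OF r lq(2)] in \<open>auto simp: comp_def\<close>)
  then obtain k where "\<bar>D ((r \<circ> q) k) ((t \<circ> q) k) - 0\<bar> < e"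
    using LIMSEQ_D[OF _ e] by fastforce
  then show False using t(2)[of "q k"] by simp
qed

context sett
begin

interpretation pair_sigma_finite lborel M by (rule psf)

lemma K_abs: "phi \<in> Kset \<delta> lam eps nu \<Longrightarrow> \<bar>phi t\<bar> \<le> \<delta> * exp (lam * t)"
  using Kset_nn[of phi t] by (auto simp: Kset_iff phi_plus_def)

lemma w_le: "w t \<le> exp ((lam / 2) * \<bar>t\<bar>)"
proof (cases "t \<le> 0")
  case True then show ?thesis by (simp add: w_def)
next
  case False
  have "w t = exp (- nu * t)" using False by (simp add: w_def)
  also have "\<dots> \<le> 1" using False nu_pos by simp
  also have "1 \<le> exp ((lam / 2) * \<bar>t\<bar>)" using lam_pos by simp
  finally show ?thesis .
qed

lemma tail:
  assumes e: "e > 0"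
  shows "\<exists>T\<ge>0. \<forall>t. T \<le> \<bar>t\<bar> \<longrightarrow> 2 * \<delta> * (w t * exp (lam * t)) \<le> e"
proof -
  define c where "c = min (lam / 2) eps"
  have c: "c > 0" using lam_pos eps_pos by (simp add: c_def)
  have we: "w t * exp (lam * t) \<le> exp (- c * \<bar>t\<bar>)" for t
  proof (cases "t \<le> 0")
    case True
    have "w t * exp (lam * t) = exp (- (lam/2) * t) * exp (lam * t)" using True by (simp add: w_def)
    also have "\<dots> = exp (- (lam/2) * \<bar>t\<bar>)" using True by (simp add: exp_add[symmetric] algebra_simps)
    also have "\<dots> \<le> exp (- c * \<bar>t\<bar>)"
    proof -
      have "c * \<bar>t\<bar> \<le> (lam/2) * \<bar>t\<bar>" by (rule mult_right_mono) (auto simp: c_def)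
      then show ?thesis by simp
    qed
    finally show ?thesis .
  next
    case False
    have "w t * exp (lam * t) = exp (- nu * t) * exp (lam * t)" using False by (simp add: w_def)
    also have "\<dots> = exp (- eps * \<bar>t\<bar>)" using False by (simp add: exp_add[symmetric] nu_def algebra_simps)
    also have "\<dots> \<le> exp (- c * \<bar>t\<bar>)"
    proof -
      have "c * \<bar>t\<bar> \<le> eps * \<bar>t\<bar>" by (rule mult_right_mono) (auto simp: c_def)
      then show ?thesis by simp
    qed
    finally show ?thesis .
  qed
  define T where "T = max 0 (ln (2 * \<delta> / e) / c)"
  show ?thesis
  proof (intro exI conjI allI impI)
    show "T \<ge> 0" by (simp add: T_def)
    fix t :: real assume t: "T \<le> \<bar>t\<bar>"
    have "ln (2 * \<delta> / e) \<le> c * \<bar>t\<bar>"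
    proof -
      have "ln (2 * \<delta> / e) / c \<le> \<bar>t\<bar>" using t by (simp add: T_def)
      then show ?thesis using c by (simp add: field_simps)
    qed
    then have "exp (- c * \<bar>t\<bar>) \<le> exp (- ln (2 * \<delta> / e))" by simp
    also have "\<dots> = e / (2 * \<delta>)" using e L_delta by (simp add: exp_minus)
    finally have "w t * exp (lam * t) \<le> e / (2 * \<delta>)" using we[of t] by simp
    then show "2 * \<delta> * (w t * exp (lam * t)) \<le> e" using L_delta by (simp add: field_simps)
  qed
qed

lemma Aop_seq:
  assumes h: "\<And>k. h k \<in> Kset \<delta> lam eps nu" and phi: "phi \<in> Kset \<delta> lam eps nu"
    and lim: "\<And>s. (\<lambda>k. h k (t k - s)) \<longlonglongrightarrow> phi (l - s)"
  shows "(\<lambda>k. Aop M K g (h k) (t k)) \<longlonglongrightarrow> Aop M K g phi l"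
proof -
  have hc: "continuous_on UNIV (h k)" and hn: "\<And>s. h k s \<ge> 0" for k
    using h Kset_nn by (auto simp: Kset_iff)
  have pc: "continuous_on UNIV phi" and pn: "\<And>s. phi s \<ge> 0"
    using phi Kset_nn by (auto simp: Kset_iff)
  have mh: "(\<lambda>s. h k (t k - s)) \<in> borel_measurable borel" for k
    by (intro borel_measurable_continuous_onI continuous_on_compose2[OF hc]) (auto intro!: continuous_intros)
  have mphi: "(\<lambda>s. phi (l - s)) \<in> borel_measurable borel"
    by (intro borel_measurable_continuous_onI continuous_on_compose2[OF pc]) (auto intro!: continuous_intros)
  have "(\<lambda>k. \<integral>x. (\<lambda>(s, \<tau>). K s \<tau> * g (h k (t k - s)) \<tau>) x \<partial>P)
        \<longlonglongrightarrow> (\<integral>x. (\<lambda>(s, \<tau>). K s \<tau> * g (phi (l - s)) \<tau>) x \<partial>P)"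
  proof (rule DCT_P[where C=B])
    show "(\<lambda>(s, \<tau>). K s \<tau> * g (h k (t k - s)) \<tau>) \<in> borel_measurable P" for k
      using GH_meas[OF mh hn] .
    show "(\<lambda>(s, \<tau>). K s \<tau> * g (phi (l - s)) \<tau>) \<in> borel_measurable P"
      using GH_meas[OF mphi pn] .
    fix x :: "real \<times> 'b" assume x: "x \<in> space P"
    then obtain s \<tau> where st: "x = (s, \<tau>)" "\<tau> \<in> space M" by (auto simp: space_P)
    have "(\<lambda>k. g (h k (t k - s)) \<tau>) \<longlonglongrightarrow> g (phi (l - s)) \<tau>"
      using hn pn by (intro g_tendsto st(2) lim) auto
    then show "(\<lambda>k. (\<lambda>(s, \<tau>). K s \<tau> * g (h k (t k - s)) \<tau>) x) \<longlonglongrightarrow> (\<lambda>(s, \<tau>). K s \<tau> * g (phi (l - s)) \<tau>) x"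
      unfolding st by (auto intro!: tendsto_intros)
    fix k
    show "\<bar>(\<lambda>(s, \<tau>). K s \<tau> * g (h k (t k - s)) \<tau>) x\<bar> \<le> B * (\<lambda>(s, \<tau>). K s \<tau>) x"
    proof -
      have "K s \<tau> * g (h k (t k - s)) \<tau> \<le> K s \<tau> * B"
        by (rule mult_left_mono[OF g_bdd[OF hn st(2)] K_nonneg[OF st(2)]])
      moreover have "0 \<le> K s \<tau> * g (h k (t k - s)) \<tau>"
        by (rule mult_nonneg_nonneg[OF K_nonneg[OF st(2)] g_nonneg[OF hn st(2)]])
      ultimately show ?thesis unfolding st by (simp add: mult.commute)
    qed
  qed
  then show ?thesis using Aop_eq(1)[OF hc hn] Aop_eq(1)[OF pc pn] by simp
qed

lemma A_continuous:
  assumes f: "\<forall>n. f n \<in> Kset \<delta> lam eps nu" and phi: "phi \<in> Kset \<delta> lam eps nu"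
    and L: "(\<lambda>n. wnorm lam nu (\<lambda>t. f n t - phi t)) \<longlonglongrightarrow> 0"
  shows "(\<lambda>n. wnorm lam nu (\<lambda>t. Aop M K g (f n) t - Aop M K g phi t)) \<longlonglongrightarrow> 0"
proof -
  have Af: "Aop M K g (f n) \<in> Kset \<delta> lam eps nu" for n using Aop_K f by auto
  have Ap: "Aop M K g phi \<in> Kset \<delta> lam eps nu" using Aop_K phi by auto
  have wbd: "wb (\<lambda>t. f n t - phi t)" for n using f phi by (intro wb_diff Kset_wb) auto
  show ?thesis
  proof (subst UWC, (intro wb_diff Kset_wb Af Ap)?, intro allI impI)
    fix e :: real assume e: "e > 0"
    obtain T where T: "T \<ge> 0" "\<And>t. T \<le> \<bar>t\<bar> \<Longrightarrow> 2 * \<delta> * (w t * exp (lam * t)) \<le> e"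
      using tail[OF e] by auto
    define c where "c = exp ((lam/2) * T)"
    have c: "c > 0" by (simp add: c_def)
    have "\<exists>N. \<forall>n\<ge>N. \<forall>t\<in>{-T..T}. \<bar>Aop M K g (f n) t - Aop M K g phi t\<bar> < e / c"
    proof (rule unif_from_seq)
      show "e / c > 0" using e c by simp
      fix r :: "nat \<Rightarrow> nat" and t :: "nat \<Rightarrow> real" and l
      assume r: "strict_mono r" and tS: "\<forall>k. t k \<in> {-T..T}" and tl: "t \<longlonglongrightarrow> l" and l: "l \<in> {-T..T}"
      have L': "(\<lambda>k. wnorm lam nu (\<lambda>t. f (r k) t - phi t)) \<longlonglongrightarrow> 0"
        using LIMSEQ_subseq_LIMSEQ[OF L r] by (simp add: comp_def)
      have 1: "(\<lambda>k. Aop M K g (f (r k)) (t k)) \<longlonglongrightarrow> Aop M K g phi l"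
      proof (rule Aop_seq[OF _ phi])
        show "f (r k) \<in> Kset \<delta> lam eps nu" for k using f by auto
        fix s
        have pl: "(\<lambda>k. phi (t k - s)) \<longlonglongrightarrow> phi (l - s)"
          using phi by (intro continuous_on_tendsto_compose[of UNIV phi]) (auto simp: Kset_iff intro!: tendsto_intros tl)
        have "(\<lambda>k. f (r k) (t k - s) - phi (t k - s)) \<longlonglongrightarrow> 0"
        proof (rule Lim_null_comparison)
          show "\<forall>\<^sub>F k in sequentially. norm (f (r k) (t k - s) - phi (t k - s))
                 \<le> wnorm lam nu (\<lambda>t. f (r k) t - phi t) * exp (nu * (T + \<bar>s\<bar>))"
          proof (rule always_eventually, rule allI)
            fix k
            have "\<bar>f (r k) (t k - s) - phi (t k - s)\<bar> \<le> wnorm lam nu (\<lambda>t. f (r k) t - phi t) * exp (nu * \<bar>t k - s\<bar>)"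
              using pt_bound[OF wbd[of "r k"]] by simp
            also have "\<dots> \<le> wnorm lam nu (\<lambda>t. f (r k) t - phi t) * exp (nu * (T + \<bar>s\<bar>))"
              using tS[rule_format, of k] nu_pos wnorm_ge(2)[OF wbd[of "r k"]]
              by (intro mult_left_mono) (auto intro!: mult_left_mono)
            finally show "norm (f (r k) (t k - s) - phi (t k - s))
                 \<le> wnorm lam nu (\<lambda>t. f (r k) t - phi t) * exp (nu * (T + \<bar>s\<bar>))" by simp
          qed
          show "(\<lambda>k. wnorm lam nu (\<lambda>t. f (r k) t - phi t) * exp (nu * (T + \<bar>s\<bar>))) \<longlonglongrightarrow> 0"
            by (rule tendsto_mult_left_zero[OF L'])
        qed
        then have "(\<lambda>k. (f (r k) (t k - s) - phi (t k - s)) + phi (t k - s)) \<longlonglongrightarrow> 0 + phi (l - s)"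
          by (intro tendsto_add pl)
        then show "(\<lambda>k. f (r k) (t k - s)) \<longlonglongrightarrow> phi (l - s)" by simp
      qed
      have 2: "(\<lambda>k. Aop M K g phi (t k)) \<longlonglongrightarrow> Aop M K g phi l"
      proof (rule Aop_seq[OF phi phi])
        fix s show "(\<lambda>k. phi (t k - s)) \<longlonglongrightarrow> phi (l - s)"
          using phi by (intro continuous_on_tendsto_compose[of UNIV phi]) (auto simp: Kset_iff intro!: tendsto_intros tl)
      qed
      show "(\<lambda>k. Aop M K g (f (r k)) (t k) - Aop M K g phi (t k)) \<longlonglongrightarrow> 0"
        using tendsto_diff[OF 1 2] by simp
    qed auto
    then obtain N where N: "\<And>n t. n \<ge> N \<Longrightarrow> t \<in> {-T..T} \<Longrightarrow> \<bar>Aop M K g (f n) t - Aop M K g phi t\<bar> < e / c"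
      by blast
    show "\<exists>N. \<forall>n\<ge>N. \<forall>t. w t * \<bar>Aop M K g (f n) t - Aop M K g phi t\<bar> \<le> e"
    proof (intro exI allI impI)
      fix n t assume n: "n \<ge> N"
      show "w t * \<bar>Aop M K g (f n) t - Aop M K g phi t\<bar> \<le> e"
      proof (cases "\<bar>t\<bar> \<le> T")
        case True
        have "(lam / 2) * \<bar>t\<bar> \<le> (lam / 2) * T" using True lam_pos by (intro mult_left_mono) auto
        then have "w t \<le> c" using w_le[of t] unfolding c_def by (meson exp_le_cancel_iff order_trans)
        moreover have "\<bar>Aop M K g (f n) t - Aop M K g phi t\<bar> \<le> e / c" using N[OF n, of t] True by (simp add: abs_le_iff less_imp_le)
        ultimately have "w t * \<bar>Aop M K g (f n) t - Aop M K g phi t\<bar> \<le> c * (e / c)"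
          using w_pos[of t] by (intro mult_mono) auto
        then show ?thesis using c by simp
      next
        case False
        have "\<bar>Aop M K g (f n) t - Aop M K g phi t\<bar> \<le> 2 * \<delta> * exp (lam * t)"
          using K_abs[OF Af[of n], of t] K_abs[OF Ap, of t] by simp
        then have "w t * \<bar>Aop M K g (f n) t - Aop M K g phi t\<bar> \<le> w t * (2 * \<delta> * exp (lam * t))"
          using w_pos[of t] by (intro mult_left_mono) auto
        also have "\<dots> \<le> e" using T(2)[of t] False by (simp add: algebra_simps)
        finally show ?thesis .
      qed
    qed
  qed
qed

end

context sett
begin

interpretation pair_sigma_finite lborel M by (rule psf)

lemma shift_meas: "(\<lambda>x. (fst x + a, snd x)) \<in> measurable P P"
  by measurable

lemma Ka_meas: "(\<lambda>(s, \<tau>). K (s + a) \<tau>) \<in> borel_measurable P"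
proof -
  have "(\<lambda>x. (\<lambda>(s, \<tau>). K s \<tau>) ((\<lambda>x. (fst x + a, snd x)) x)) \<in> borel_measurable P"
    by (rule measurable_compose[OF shift_meas K_meas])
  then show ?thesis by (simp add: split_beta')
qed

lemma kt_int: "integrable M (\<lambda>\<tau>. \<integral>s. K s \<tau> \<partial>lborel)"
  using integrable_snd[of "\<lambda>s \<tau>. K s \<tau>"] K_int by simp

lemma psf2: "pair_sigma_finite M lborel"
proof -
  interpret finite_measure M by (rule finM)
  show ?thesis by unfold_locales
qed

lemma Ka_int: "integrable P (\<lambda>(s, \<tau>). K (s + a) \<tau>)"
proof -
  interpret Q: pair_sigma_finite M lborel by (rule psf2)
  have "integrable (M \<Otimes>\<^sub>M lborel) (\<lambda>(\<tau>, s). K (s + a) \<tau>)"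
  proof (rule Q.Fubini_integrable)
    show "(\<lambda>(\<tau>, s). K (s + a) \<tau>) \<in> borel_measurable (M \<Otimes>\<^sub>M lborel)"
      using measurable_pair_swap[OF Ka_meas[of a]] by (simp add: split_beta')
    have "integrable M (\<lambda>\<tau>. \<integral>s. K s \<tau> \<partial>lborel)" by (rule kt_int)
    then show "integrable M (\<lambda>x. \<integral>y. norm ((\<lambda>(\<tau>, s). K (s + a) \<tau>) (x, y)) \<partial>lborel)"
    proof (rule Bochner_Integration.integrable_cong[THEN iffD1, rotated -1])
      fix \<tau> assume \<tau>: "\<tau> \<in> space M"
      have "(\<integral>y. norm ((\<lambda>(\<tau>, s). K (s + a) \<tau>) (\<tau>, y)) \<partial>lborel) = (\<integral>y. K (y + a) \<tau> \<partial>lborel)"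
        using K_nonneg[OF \<tau>] by simp
      also have "\<dots> = (\<integral>s. K s \<tau> \<partial>lborel)" by (rule integral_shift_lborel)
      finally show "(\<integral>s. K s \<tau> \<partial>lborel) = (\<integral>y. norm ((\<lambda>(\<tau>, s). K (s + a) \<tau>) (\<tau>, y)) \<partial>lborel)" by simp
    qed simp
    show "AE x in M. integrable lborel (\<lambda>y. (\<lambda>(\<tau>, s). K (s + a) \<tau>) (x, y))"
      by (auto intro!: AE_I2 integrable_shift K_integrable)
  qed
  then show ?thesis
    using integrable_product_swap_iff[of "\<lambda>(s, \<tau>). K (s + a) \<tau>"] by (simp add: split_beta')
qed

definition om :: "real \<Rightarrow> real" where
  "om a = (\<integral>x. (\<lambda>(s, \<tau>). \<bar>K (s + a) \<tau> - K s \<tau>\<bar>) x \<partial>P)"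

lemma om_int: "integrable P (\<lambda>(s, \<tau>). \<bar>K (s + a) \<tau> - K s \<tau>\<bar>)"
  using Bochner_Integration.integrable_diff[OF Ka_int[of a] K_int] by (simp add: split_beta')

lemma om_eq: "om a = (\<integral>\<tau>. (\<integral>s. \<bar>K (s + a) \<tau> - K s \<tau>\<bar> \<partial>lborel) \<partial>M)"
  unfolding om_def using integral_snd[of "\<lambda>s \<tau>. \<bar>K (s + a) \<tau> - K s \<tau>\<bar>"] om_int[of a] by simp

lemma om_lim: "(om \<longlongrightarrow> 0) (at 0)"
proof (subst tendsto_at_iff_sequentially, intro allI impI)
  fix X :: "nat \<Rightarrow> real" assume X0: "\<forall>i. X i \<in> UNIV - {0}" and X: "X \<longlonglongrightarrow> 0"
  have XF: "filterlim X (at 0) sequentially"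
    using X0 X by (intro filterlim_atI) auto
  have "(\<lambda>n. \<integral>\<tau>. (\<integral>s. \<bar>K (s + X n) \<tau> - K s \<tau>\<bar> \<partial>lborel) \<partial>M) \<longlonglongrightarrow> (\<integral>\<tau>. 0 \<partial>M)"
  proof (rule Bochner_Integration.integral_dominated_convergence[where w="\<lambda>\<tau>. 2 * (\<integral>s. K s \<tau> \<partial>lborel)"])
    show "(\<lambda>\<tau>. 0::real) \<in> borel_measurable M" by simp
    show "(\<lambda>\<tau>. \<integral>s. \<bar>K (s + X n) \<tau> - K s \<tau>\<bar> \<partial>lborel) \<in> borel_measurable M" for n
      using integrable_snd[of "\<lambda>s \<tau>. \<bar>K (s + X n) \<tau> - K s \<tau>\<bar>"] om_int[of "X n"] by auto
    show "integrable M (\<lambda>\<tau>. 2 * (\<integral>s. K s \<tau> \<partial>lborel))" using kt_int by auto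
    show "AE \<tau> in M. (\<lambda>n. \<integral>s. \<bar>K (s + X n) \<tau> - K s \<tau>\<bar> \<partial>lborel) \<longlonglongrightarrow> 0"
    proof (rule AE_I2)
      fix \<tau> assume \<tau>: "\<tau> \<in> space M"
      have "tc (\<lambda>s. K s \<tau>)" by (rule tc_integrable[OF K_integrable[OF \<tau>]])
      then have "((\<lambda>x. \<integral>s. \<bar>K (s + x) \<tau> - K s \<tau>\<bar> \<partial>lborel) \<longlongrightarrow> 0) (at 0)" by (simp add: tc_def)
      from filterlim_compose[OF this XF]
      show "(\<lambda>n. \<integral>s. \<bar>K (s + X n) \<tau> - K s \<tau>\<bar> \<partial>lborel) \<longlonglongrightarrow> 0" by simp
    qed
    show "AE \<tau> in M. norm (\<integral>s. \<bar>K (s + X n) \<tau> - K s \<tau>\<bar> \<partial>lborel) \<le> 2 * (\<integral>s. K s \<tau> \<partial>lborel)" for n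
    proof (rule AE_I2)
      fix \<tau> assume \<tau>: "\<tau> \<in> space M"
      have i1: "integrable lborel (\<lambda>s. K (s + X n) \<tau>)" by (rule integrable_shift[OF K_integrable[OF \<tau>]])
      have "(\<integral>s. \<bar>K (s + X n) \<tau> - K s \<tau>\<bar> \<partial>lborel) \<le> (\<integral>s. K (s + X n) \<tau> + K s \<tau> \<partial>lborel)"
      proof (rule integral_mono)
        show "integrable lborel (\<lambda>s. \<bar>K (s + X n) \<tau> - K s \<tau>\<bar>)" using i1 K_integrable[OF \<tau>] by auto
        show "integrable lborel (\<lambda>s. K (s + X n) \<tau> + K s \<tau>)" using i1 K_integrable[OF \<tau>] by auto
        fix s show "\<bar>K (s + X n) \<tau> - K s \<tau>\<bar> \<le> K (s + X n) \<tau> + K s \<tau>"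
          using K_nonneg[OF \<tau>, of "s + X n"] K_nonneg[OF \<tau>, of s] by linarith
      qed
      also have "\<dots> = (\<integral>s. K (s + X n) \<tau> \<partial>lborel) + (\<integral>s. K s \<tau> \<partial>lborel)"
        using i1 K_integrable[OF \<tau>] by simp
      also have "\<dots> = 2 * (\<integral>s. K s \<tau> \<partial>lborel)" using integral_shift_lborel[of "\<lambda>s. K s \<tau>" "X n"] by simp
      finally show "norm (\<integral>s. \<bar>K (s + X n) \<tau> - K s \<tau>\<bar> \<partial>lborel) \<le> 2 * (\<integral>s. K s \<tau> \<partial>lborel)" by simp
    qed
  qed
  then show "(om \<circ> X) \<longlonglongrightarrow> 0" by (simp add: om_eq comp_def)
qed

lemma om_small: "e > 0 \<Longrightarrow> \<exists>d>0. \<forall>a. \<bar>a\<bar> < d \<longrightarrow> om a < e"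
proof -
  assume e: "e > 0"
  have "om 0 = 0" by (simp add: om_def)
  from tendstoD[OF om_lim e] obtain d where d: "d > 0" "\<And>x. x \<noteq> 0 \<Longrightarrow> dist x 0 < d \<Longrightarrow> dist (om x) 0 < e"
    unfolding eventually_at by auto
  show ?thesis
  proof (intro exI conjI allI impI)
    fix a :: real assume "\<bar>a\<bar> < d"
    then show "om a < e" using d(2)[of a] e \<open>om 0 = 0\<close> by (cases "a = 0") auto
  qed (rule d(1))
qed

lemma Aop_equi:
  assumes phi: "phi \<in> Kset \<delta> lam eps nu"
  shows "\<bar>Aop M K g phi t - Aop M K g phi t'\<bar> \<le> B * om (t - t')"
proof -
  define a where "a = t - t'"
  have pc: "continuous_on UNIV phi" and nn: "\<And>s. phi s \<ge> 0"
    using phi Kset_nn by (auto simp: Kset_iff)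
  have m: "(\<lambda>s. phi (t' - s)) \<in> borel_measurable borel"
    by (intro borel_measurable_continuous_onI continuous_on_compose2[OF pc]) (auto intro!: continuous_intros)
  let ?Ha = "\<lambda>(s, \<tau>). K (s + a) \<tau> * g (phi (t' - s)) \<tau>"
  let ?H0 = "\<lambda>(s, \<tau>). K s \<tau> * g (phi (t' - s)) \<tau>"
  have mg: "(\<lambda>(s, \<tau>). g (phi (t' - s)) \<tau>) \<in> borel_measurable P" by (rule g_meas'[OF m nn])
  have iHa: "integrable P ?Ha"
  proof (rule Bochner_Integration.integrable_bound)
    show "integrable P (\<lambda>x. B * (\<lambda>(s, \<tau>). K (s + a) \<tau>) x)" using Ka_int by auto
    show "?Ha \<in> borel_measurable P"
      using borel_measurable_times[OF Ka_meas[of a] mg] by (simp add: split_beta')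
    show "AE x in P. norm (?Ha x) \<le> norm (B * (\<lambda>(s, \<tau>). K (s + a) \<tau>) x)"
    proof (rule AE_I2)
      fix x :: "real \<times> 'b" assume "x \<in> space P"
      then obtain s \<tau> where x: "x = (s, \<tau>)" "\<tau> \<in> space M" by (auto simp: space_P)
      have "K (s + a) \<tau> * g (phi (t' - s)) \<tau> \<le> K (s + a) \<tau> * B"
        by (rule mult_left_mono[OF g_bdd[OF nn x(2)] K_nonneg[OF x(2)]])
      then show "norm (?Ha x) \<le> norm (B * (\<lambda>(s, \<tau>). K (s + a) \<tau>) x)"
        using K_nonneg[OF x(2), of "s + a"] g_nonneg[OF nn x(2), of "t' - s"] Bnn x by (simp add: mult.commute)
    qed
  qed
  have iH0: "integrable P ?H0" using GH_int[OF m nn] .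
  have eqt: "Aop M K g phi t = (\<integral>x. ?Ha x \<partial>P)"
  proof -
    have "Aop M K g phi t = (\<integral>\<tau>. (\<integral>s. K (s + a) \<tau> * g (phi (t' - s)) \<tau> \<partial>lborel) \<partial>M)"
      unfolding Aop_def
    proof (rule Bochner_Integration.integral_cong[OF refl])
      fix \<tau>
      have "(\<integral>s. K s \<tau> * g (phi (t - s)) \<tau> \<partial>lborel) = (\<integral>s. K (s + a) \<tau> * g (phi (t - (s + a))) \<tau> \<partial>lborel)"
        using integral_shift_lborel[of "\<lambda>s. K s \<tau> * g (phi (t - s)) \<tau>" a] by simp
      also have "\<dots> = (\<integral>s. K (s + a) \<tau> * g (phi (t' - s)) \<tau> \<partial>lborel)"
        by (simp add: a_def algebra_simps)
      finally show "(\<integral>s. K s \<tau> * g (phi (t - s)) \<tau> \<partial>lborel) = (\<integral>s. K (s + a) \<tau> * g (phi (t' - s)) \<tau> \<partial>lborel)" .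
    qed
    also have "\<dots> = (\<integral>x. ?Ha x \<partial>P)"
      using integral_snd[of "\<lambda>s \<tau>. K (s + a) \<tau> * g (phi (t' - s)) \<tau>"] iHa by simp
    finally show ?thesis .
  qed
  have eqt': "Aop M K g phi t' = (\<integral>x. ?H0 x \<partial>P)" using Aop_eq(1)[OF pc nn] .
  have dif: "(\<integral>x. ?Ha x - ?H0 x \<partial>P) = (\<integral>x. ?Ha x \<partial>P) - (\<integral>x. ?H0 x \<partial>P)"
    by (rule Bochner_Integration.integral_diff[OF iHa iH0])
  have "\<bar>Aop M K g phi t - Aop M K g phi t'\<bar> = \<bar>\<integral>x. ?Ha x - ?H0 x \<partial>P\<bar>"
    unfolding dif eqt eqt' ..
  also have "\<dots> \<le> (\<integral>x. \<bar>?Ha x - ?H0 x\<bar> \<partial>P)" by (rule integral_abs_bound)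
  also have "\<dots> \<le> (\<integral>x. B * (\<lambda>(s, \<tau>). \<bar>K (s + a) \<tau> - K s \<tau>\<bar>) x \<partial>P)"
  proof (rule integral_mono)
    show "integrable P (\<lambda>x. \<bar>?Ha x - ?H0 x\<bar>)"
      by (rule integrable_abs[OF Bochner_Integration.integrable_diff[OF iHa iH0]])
    show "integrable P (\<lambda>x. B * (\<lambda>(s, \<tau>). \<bar>K (s + a) \<tau> - K s \<tau>\<bar>) x)" using om_int by auto
    fix x :: "real \<times> 'b" assume "x \<in> space P"
    then obtain s \<tau> where x: "x = (s, \<tau>)" "\<tau> \<in> space M" by (auto simp: space_P)
    have "\<bar>?Ha x - ?H0 x\<bar> = \<bar>K (s + a) \<tau> - K s \<tau>\<bar> * g (phi (t' - s)) \<tau>"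
      using g_nonneg[OF nn x(2), of "t' - s"] by (simp add: x left_diff_distrib[symmetric] abs_mult)
    also have "\<dots> \<le> \<bar>K (s + a) \<tau> - K s \<tau>\<bar> * B" by (rule mult_left_mono[OF g_bdd[OF nn x(2)]]) simp
    finally show "\<bar>?Ha x - ?H0 x\<bar> \<le> B * (\<lambda>(s, \<tau>). \<bar>K (s + a) \<tau> - K s \<tau>\<bar>) x" by (simp add: x mult.commute)
  qed
  also have "\<dots> = B * om a" by (simp add: om_def)
  finally show ?thesis by (simp add: a_def)
qed

end

context sett
begin

lemma om_nn: "om a \<ge> 0" unfolding om_def by (rule integral_nonneg_AE) (auto simp: split_beta')

lemma compact_A:
  fixes f :: "nat \<Rightarrow> real \<Rightarrow> real"
  assumes f: "\<forall>n. f n \<in> Kset \<delta> lam eps nu"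
  shows "\<exists>r \<psi>. strict_mono r \<and> \<psi> \<in> Xsp lam nu
              \<and> (\<lambda>n. wnorm lam nu (\<lambda>t. Aop M K g (f (r n)) t - \<psi> t)) \<longlonglongrightarrow> 0"
proof -
  define F where "F n = Aop M K g (f n)" for n
  have FK: "F n \<in> Kset \<delta> lam eps nu" for n using Aop_K f by (simp add: F_def)
  have Fb: "\<bar>F n x\<bar> \<le> \<delta> * exp (lam * x)" for n x using K_abs[OF FK] .
  have Fe: "\<bar>F n x - F n y\<bar> \<le> B * om (x - y)" for n x y unfolding F_def using Aop_equi f by auto
  define Pc where "Pc i r \<longleftrightarrow> (\<forall>e>0. \<exists>N. \<forall>m\<ge>N. \<forall>n\<ge>N. \<forall>x\<in>{- real i..real i}. \<bar>F (r m) x - F (r n) x\<bar> < e)"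
    for i :: nat and r :: "nat \<Rightarrow> nat"
  obtain k where k: "strict_mono k" "\<And>i. Pc i (id \<circ> k)"
  proof (rule subsequence_diagonalization_lemma[of Pc id])
    fix i :: nat and r :: "nat \<Rightarrow> nat"
    let ?S = "{- real i..real i}"
    have cS: "compact ?S" by simp
    have bnd: "norm (F (r n) x) \<le> \<delta> * exp (lam * real i)" if x: "x \<in> ?S" for n x
    proof -
      have "\<bar>F (r n) x\<bar> \<le> \<delta> * exp (lam * x)" by (rule Fb)
      also have "\<dots> \<le> \<delta> * exp (lam * real i)" using x lam_pos L_delta by (auto intro!: mult_left_mono)
      finally show "norm (F (r n) x) \<le> \<delta> * exp (lam * real i)" by simp
    qed
    have equi: "\<exists>d>0. \<forall>n y. y \<in> ?S \<and> norm (x - y) < d \<longrightarrow> norm (F (r n) x - F (r n) y) < e"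
      if x: "x \<in> ?S" and e: "0 < e" for x e :: real
    proof -
      obtain d where d: "d > 0" "\<And>a. \<bar>a\<bar> < d \<Longrightarrow> om a < e / (B + 1)"
        using om_small[of "e / (B + 1)"] e Bnn by auto
      show "\<exists>d>0. \<forall>n y. y \<in> ?S \<and> norm (x - y) < d \<longrightarrow> norm (F (r n) x - F (r n) y) < e"
      proof (intro exI conjI allI impI)
        fix n y assume "y \<in> ?S \<and> norm (x - y) < d"
        then have "om (x - y) < e / (B + 1)" using d by simp
        then have "B * om (x - y) \<le> B * (e / (B + 1))" using Bnn by (intro mult_left_mono) auto
        also have "\<dots> < e" using Bnn e by (simp add: field_simps)
        finally show "norm (F (r n) x - F (r n) y) < e" using Fe[of "r n" x y] by simp
      qed (rule d(1))
    qed
    obtain gg and kk :: "nat \<Rightarrow> nat" where gg: "continuous_on ?S gg" and kk: "strict_mono kk"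
      and U: "\<And>e. 0 < e \<Longrightarrow> \<exists>N. \<forall>n x. n \<ge> N \<and> x \<in> ?S \<longrightarrow> norm (F (r (kk n)) x - gg x) < e"
    proof (rule Arzela_Ascoli[where \<F>="\<lambda>n. F (r n)" and S="?S" and M="\<delta> * exp (lam * real i)"])
      show "compact ?S" by (rule cS)
      show "\<And>n x. x \<in> ?S \<Longrightarrow> norm (F (r n) x) \<le> \<delta> * exp (lam * real i)" by (rule bnd)
      show "\<And>x e. x \<in> ?S \<Longrightarrow> 0 < e \<Longrightarrow> \<exists>d>0. \<forall>n y. y \<in> ?S \<and> norm (x - y) < d \<longrightarrow> norm (F (r n) x - F (r n) y) < e"
        by (rule equi)
    next
      fix g' and k' :: "nat \<Rightarrow> nat"
      assume a: "continuous_on ?S g'" "strict_mono k'"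
        "\<And>e. 0 < e \<Longrightarrow> \<exists>N. \<forall>n x. n \<ge> N \<and> x \<in> ?S \<longrightarrow> norm ((\<lambda>n. F (r n)) (k' n) x - g' x) < e"
      show thesis apply (rule that[of g' k']) using a apply auto done
    qed
    show "\<exists>kk. strict_mono kk \<and> Pc i (r \<circ> kk)"
    proof (intro exI conjI)
      show "strict_mono kk" by (rule kk)
      show "Pc i (r \<circ> kk)" unfolding Pc_def
      proof (intro allI impI)
        fix e :: real assume e: "e > 0"
        obtain N where N: "\<And>n x. n \<ge> N \<Longrightarrow> x \<in> ?S \<Longrightarrow> \<bar>F (r (kk n)) x - gg x\<bar> < e / 2"
          using U[of "e/2"] e by auto
        show "\<exists>N. \<forall>m\<ge>N. \<forall>n\<ge>N. \<forall>x\<in>?S. \<bar>F ((r \<circ> kk) m) x - F ((r \<circ> kk) n) x\<bar> < e"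
        proof (intro exI allI impI ballI)
          fix m n x assume mn: "m \<ge> N" "n \<ge> N" "x \<in> ?S"
          have "\<bar>F (r (kk m)) x - gg x\<bar> < e / 2" "\<bar>F (r (kk n)) x - gg x\<bar> < e / 2"
            using N[of m x] N[of n x] mn by auto
          then show "\<bar>F ((r \<circ> kk) m) x - F ((r \<circ> kk) n) x\<bar> < e"
            by (simp add: comp_def abs_diff_less_iff) (smt (verit) abs_triangle_ineq4 abs_minus_commute)
        qed
      qed
    qed
  next
    fix i :: nat and r k1 k2 :: "nat \<Rightarrow> nat" and N :: nat
    assume P1: "Pc i (r \<circ> k1)" and sub: "\<And>j. N \<le> j \<Longrightarrow> \<exists>j'. j \<le> j' \<and> k2 j = k1 j'"
    show "Pc i (r \<circ> k2)" unfolding Pc_def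
    proof (intro allI impI)
      fix e :: real assume e: "e > 0"
      have "\<exists>N. \<forall>m\<ge>N. \<forall>n\<ge>N. \<forall>x\<in>{- real i..real i}. \<bar>(F \<circ> (r \<circ> k1)) m x - (F \<circ> (r \<circ> k1)) n x\<bar> < e"
        using P1 e unfolding Pc_def by (simp add: comp_def)
      then obtain N1 where N1': "\<forall>m\<ge>N1. \<forall>n\<ge>N1. \<forall>x\<in>{- real i..real i}. \<bar>(F \<circ> (r \<circ> k1)) m x - (F \<circ> (r \<circ> k1)) n x\<bar> < e"
        by (elim exE)
      have N1: "\<And>m n x. m \<ge> N1 \<Longrightarrow> n \<ge> N1 \<Longrightarrow> x \<in> {- real i..real i} \<Longrightarrow> \<bar>F (r (k1 m)) x - F (r (k1 n)) x\<bar> < e"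
        using N1' by simp
      show "\<exists>N'. \<forall>m\<ge>N'. \<forall>n\<ge>N'. \<forall>x\<in>{- real i..real i}. \<bar>F ((r \<circ> k2) m) x - F ((r \<circ> k2) n) x\<bar> < e"
      proof (intro exI allI impI ballI)
        fix m n x assume m: "m \<ge> max N N1" and n: "n \<ge> max N N1" and x: "x \<in> {- real i..real i}"
        obtain m' where m': "m \<le> m'" "k2 m = k1 m'" using sub[of m] m by auto
        obtain n' where n': "n \<le> n'" "k2 n = k1 n'" using sub[of n] n by auto
        show "\<bar>F ((r \<circ> k2) m) x - F ((r \<circ> k2) n) x\<bar> < e"
          using N1[of m' n' x] m n m' n' x by auto
      qed
    qed
  qed auto
  define G where "G n = F (k n)" for n
  have GX: "G n \<in> Xsp lam nu" for n using FK by (simp add: G_def Kset_def)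
  have Gc: "\<forall>e>0. \<exists>N. \<forall>m\<ge>N. \<forall>n\<ge>N. wnorm lam nu (\<lambda>t. G m t - G n t) < e"
  proof (intro allI impI)
    fix e :: real assume e: "e > 0"
    obtain T where T: "T \<ge> 0" "\<And>t. T \<le> \<bar>t\<bar> \<Longrightarrow> 2 * \<delta> * (w t * exp (lam * t)) \<le> e / 4"
      using tail[of "e/4"] e by auto
    define i where "i = nat \<lceil>T\<rceil>"
    have Ti: "T \<le> real i" by (simp add: i_def real_nat_ceiling_ge)
    define c where "c = exp ((lam / 2) * real i)"
    have c: "c > 0" by (simp add: c_def)
    have ec: "e / (4 * c) > 0" using e c by simp
    obtain N where N': "\<forall>m\<ge>N. \<forall>n\<ge>N. \<forall>x\<in>{- real i..real i}. \<bar>F ((id \<circ> k) m) x - F ((id \<circ> k) n) x\<bar> < e / (4 * c)"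
      using k(2)[of i, unfolded Pc_def, rule_format, OF ec] by (elim exE)
    have N: "\<And>m n x. m \<ge> N \<Longrightarrow> n \<ge> N \<Longrightarrow> x \<in> {- real i..real i} \<Longrightarrow> \<bar>G m x - G n x\<bar> < e / (4 * c)"
      using N' by (simp add: G_def)
    show "\<exists>N. \<forall>m\<ge>N. \<forall>n\<ge>N. wnorm lam nu (\<lambda>t. G m t - G n t) < e"
    proof (intro exI allI impI)
      fix m n assume m: "m \<ge> N" and n: "n \<ge> N"
      have "w x * \<bar>G m x - G n x\<bar> \<le> e / 4" for x
      proof (cases "\<bar>x\<bar> \<le> real i")
        case True
        have "(lam / 2) * \<bar>x\<bar> \<le> (lam / 2) * real i" using True lam_pos by (intro mult_left_mono) auto
        then have "w x \<le> c" using w_le[of x] unfolding c_def by (meson exp_le_cancel_iff order_trans)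
        moreover have "\<bar>G m x - G n x\<bar> \<le> e / (4 * c)" using N[OF m n, of x] True by (simp add: abs_le_iff less_imp_le)
        ultimately have "w x * \<bar>G m x - G n x\<bar> \<le> c * (e / (4 * c))"
          using w_pos[of x] by (intro mult_mono) auto
        then show ?thesis using c by simp
      next
        case False
        have "\<bar>G m x - G n x\<bar> \<le> 2 * \<delta> * exp (lam * x)"
          using Fb[of "k m" x] Fb[of "k n" x] by (simp add: G_def)
        then have "w x * \<bar>G m x - G n x\<bar> \<le> w x * (2 * \<delta> * exp (lam * x))"
          using w_pos[of x] by (intro mult_left_mono) auto
        also have "\<dots> \<le> e / 4" using T(2)[of x] False Ti by (simp add: algebra_simps)
        finally show ?thesis .
      qed
      then have "wnorm lam nu (\<lambda>t. G m t - G n t) \<le> 2 * (e / 4)" by (intro wnorm_le)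
      then show "wnorm lam nu (\<lambda>t. G m t - G n t) < e" using e by simp
    qed
  qed
  obtain \<psi> where "\<psi> \<in> Xsp lam nu" "(\<lambda>n. wnorm lam nu (\<lambda>t. G n t - \<psi> t)) \<longlonglongrightarrow> 0"
    using complete_X[of G] GX Gc by auto
  then show ?thesis using k(1) by (intro exI[of _ k] exI[of _ \<psi>]) (simp add: G_def F_def)
qed

end

theorem lemma4p1:
  fixes M :: "'b measure" and K :: "real \<Rightarrow> 'b \<Rightarrow> real" and g :: "real \<Rightarrow> 'b \<Rightarrow> real"
    and gd :: "'b \<Rightarrow> real" and \<tau>0 :: 'b
    and \<zeta>2 \<delta> \<omega> lam eps nu :: real
  assumes finM: "finite_measure M"
    (* the kernel K *)
    and K_meas: "(\<lambda>(s, \<tau>). K s \<tau>) \<in> borel_measurable (lborel \<Otimes>\<^sub>M M)"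
    and K_int: "integrable (lborel \<Otimes>\<^sub>M M) (\<lambda>(s, \<tau>). K s \<tau>)"
    and K_nonneg: "\<And>s \<tau>. \<tau> \<in> space M \<Longrightarrow> K s \<tau> \<ge> 0"
    and K_pos: "\<And>\<tau>. \<tau> \<in> space M \<Longrightarrow> (\<integral>s. K s \<tau> \<partial>lborel) > 0"
    (* the nonlinearity g on [0,oo) x X *)
    and g_meas: "(\<lambda>(v, \<tau>). g (max v 0) \<tau>) \<in> borel_measurable (borel \<Otimes>\<^sub>M M)"
    and g_nonneg: "\<And>v \<tau>. v \<ge> 0 \<Longrightarrow> \<tau> \<in> space M \<Longrightarrow> g v \<tau> \<ge> 0"
    and g_zero: "\<And>\<tau>. \<tau> \<in> space M \<Longrightarrow> g 0 \<tau> = 0"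
    and g_cont: "\<And>\<tau>. \<tau> \<in> space M \<Longrightarrow> continuous_on {0..} (\<lambda>v. g v \<tau>)"
    and g_deriv: "\<And>\<tau>. \<tau> \<in> space M \<Longrightarrow> ((\<lambda>v. g v \<tau>) has_real_derivative gd \<tau>) (at 0 within {0..})"
    and gd_pos: "\<And>\<tau>. \<tau> \<in> space M \<Longrightarrow> gd \<tau> > 0"
    (* condition (N) *)
    and N1_tau0: "\<tau>0 \<in> space M" "{\<tau>0} \<in> sets M" "measure M {\<tau>0} = 1"
    and N1_mono: "\<And>\<tau>. \<tau> \<in> space M \<Longrightarrow> \<tau> \<noteq> \<tau>0 \<Longrightarrow> mono_on {0..} (\<lambda>v. g v \<tau>)"
    and N1_pos: "\<And>v. v > 0 \<Longrightarrow> g v \<tau>0 > 0"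
    and N2_zeta: "\<zeta>2 > 0"
    and N2_mono: "strict_mono_on {0..\<zeta>2}
        (\<lambda>v. v - (\<integral>\<tau>\<in>space M - {\<tau>0}. g v \<tau> * (\<integral>s. K s \<tau> \<partial>lborel) \<partial>M))"
    and N2_ineq: "\<zeta>2 - (\<integral>\<tau>\<in>space M - {\<tau>0}. g \<zeta>2 \<tau> * (\<integral>s. K s \<tau> \<partial>lborel) \<partial>M)
        > (\<integral>s. K s \<tau>0 \<partial>lborel) * (SUP v\<in>{0..}. g v \<tau>0)"
    (* chi(0) < 0 *)
    and chi0_def: "chi_defined M K gd 0"
    and chi0_neg: "chi M K gd 0 < 0"
    (* subtangency *)
    and g_sub: "\<And>s \<tau>. s \<ge> 0 \<Longrightarrow> \<tau> \<in> space M \<Longrightarrow> g s \<tau> \<le> gd \<tau> * s"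
    (* condition (L) *)
    and L_bdd: "\<exists>B. \<forall>v \<ge> 0. \<forall>\<tau> \<in> space M. g v \<tau> \<le> B"
    and L_pos: "\<And>s \<tau>. s > 0 \<Longrightarrow> \<tau> \<in> space M \<Longrightarrow> g s \<tau> > 0"
    and L_delta: "\<delta> > 0"
    and L_lin: "\<And>s \<tau>. 0 \<le> s \<Longrightarrow> s < \<delta> \<Longrightarrow> \<tau> \<in> space M \<Longrightarrow> g s \<tau> = gd \<tau> * s"
    (* chi on (0, omega) *)
    and chi_dom: "\<And>z. 0 < z \<Longrightarrow> z < \<omega> \<Longrightarrow> chi_defined M K gd z"
    and chi_sign: "\<exists>z1 z2. z1 \<in> {0<..<\<omega>} \<and> z2 \<in> {0<..<\<omega>} \<and> chi M K gd z1 < 0 \<and> chi M K gd z2 > 0"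
    and lam_range: "0 < lam" "lam < \<omega>"
    and lam_zero: "chi M K gd lam = 0"
    and lam_leftmost: "\<And>z. 0 < z \<Longrightarrow> z < lam \<Longrightarrow> chi M K gd z \<noteq> 0"
    and eps_pos: "eps > 0"
    and nu_def: "nu = lam + eps"
    and nu_lt: "nu < \<omega>"
    and chi_nu: "chi M K gd nu > 0"
  shows "(\<forall>f. (\<forall>n. f n \<in> Xsp lam nu)
          \<and> (\<forall>e>0. \<exists>N. \<forall>m\<ge>N. \<forall>n\<ge>N. wnorm lam nu (\<lambda>t. f m t - f n t) < e)
        \<longrightarrow> (\<exists>\<phi>\<in>Xsp lam nu. (\<lambda>n. wnorm lam nu (\<lambda>t. f n t - \<phi> t)) \<longlonglongrightarrow> 0))
   \<and> (Kset \<delta> lam eps nu \<subseteq> Xsp lam nu)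
   \<and> (\<forall>f \<phi>. (\<forall>n. f n \<in> Kset \<delta> lam eps nu) \<and> \<phi> \<in> Xsp lam nu
        \<and> (\<lambda>n. wnorm lam nu (\<lambda>t. f n t - \<phi> t)) \<longlonglongrightarrow> 0
        \<longrightarrow> \<phi> \<in> Kset \<delta> lam eps nu)
   \<and> (\<exists>B. \<forall>\<phi>\<in>Kset \<delta> lam eps nu. wnorm lam nu \<phi> \<le> B)
   \<and> (\<forall>\<phi>\<in>Kset \<delta> lam eps nu. \<forall>\<psi>\<in>Kset \<delta> lam eps nu. \<forall>a\<in>{0..1::real}.
        (\<lambda>t. a * \<phi> t + (1 - a) * \<psi> t) \<in> Kset \<delta> lam eps nu)
   \<and> (Aop M K g ` Kset \<delta> lam eps nu \<subseteq> Kset \<delta> lam eps nu)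
   \<and> (\<forall>f \<phi>. (\<forall>n. f n \<in> Kset \<delta> lam eps nu) \<and> \<phi> \<in> Kset \<delta> lam eps nu
        \<and> (\<lambda>n. wnorm lam nu (\<lambda>t. f n t - \<phi> t)) \<longlonglongrightarrow> 0
        \<longrightarrow> (\<lambda>n. wnorm lam nu (\<lambda>t. Aop M K g (f n) t - Aop M K g \<phi> t)) \<longlonglongrightarrow> 0)
   \<and> (\<forall>f :: nat \<Rightarrow> real \<Rightarrow> real. (\<forall>n. f n \<in> Kset \<delta> lam eps nu)
        \<longrightarrow> (\<exists>r \<psi>. strict_mono r \<and> \<psi> \<in> Xsp lam nu
              \<and> (\<lambda>n. wnorm lam nu (\<lambda>t. Aop M K g (f (r n)) t - \<psi> t)) \<longlonglongrightarrow> 0))"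
  proof -
  obtain B0 where B0: "\<forall>v \<ge> 0. \<forall>\<tau> \<in> space M. g v \<tau> \<le> B0" using L_bdd by blast
  have nu_pos: "0 < nu" using nu_def lam_range eps_pos by simp
  have gb: "\<And>v \<tau>. 0 \<le> v \<Longrightarrow> \<tau> \<in> space M \<Longrightarrow> g v \<tau> \<le> max B0 0" using B0 by force
  have cl: "chi_defined M K gd lam" using chi_dom lam_range by blast
  have cn: "chi_defined M K gd nu" using chi_dom nu_pos nu_lt by blast
  have st: "sett M K g gd (max B0 0) \<delta> lam eps nu"
    unfolding sett_def
    using finM K_meas K_int K_nonneg K_pos g_meas g_nonneg g_cont gd_pos g_sub gb L_delta L_lin
      lam_range(1) eps_pos nu_def cl cn lam_zero chi_nu
    by (intro conjI; (simp; fail)?; blast)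
  interpret S: sett M K g gd "max B0 0" \<delta> lam eps nu by (rule st)
  show ?thesis
  proof (intro conjI)
    show "\<forall>f. (\<forall>n. f n \<in> Xsp lam nu)
          \<and> (\<forall>e>0. \<exists>N. \<forall>m\<ge>N. \<forall>n\<ge>N. wnorm lam nu (\<lambda>t. f m t - f n t) < e)
        \<longrightarrow> (\<exists>\<phi>\<in>Xsp lam nu. (\<lambda>n. wnorm lam nu (\<lambda>t. f n t - \<phi> t)) \<longlonglongrightarrow> 0)"
      using S.complete_X by blast
    show "Kset \<delta> lam eps nu \<subseteq> Xsp lam nu" by (auto simp: Kset_def)
    show "\<forall>f \<phi>. (\<forall>n. f n \<in> Kset \<delta> lam eps nu) \<and> \<phi> \<in> Xsp lam nu
        \<and> (\<lambda>n. wnorm lam nu (\<lambda>t. f n t - \<phi> t)) \<longlonglongrightarrow> 0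
        \<longrightarrow> \<phi> \<in> Kset \<delta> lam eps nu"
      using S.closed_K by blast
    show "\<exists>B. \<forall>\<phi>\<in>Kset \<delta> lam eps nu. wnorm lam nu \<phi> \<le> B" by (rule S.bounded_K)
    show "\<forall>\<phi>\<in>Kset \<delta> lam eps nu. \<forall>\<psi>\<in>Kset \<delta> lam eps nu. \<forall>a\<in>{0..1::real}.
        (\<lambda>t. a * \<phi> t + (1 - a) * \<psi> t) \<in> Kset \<delta> lam eps nu"
      using S.convex_K by blast
    show "Aop M K g ` Kset \<delta> lam eps nu \<subseteq> Kset \<delta> lam eps nu" using S.Aop_K by blast
    show "\<forall>f \<phi>. (\<forall>n. f n \<in> Kset \<delta> lam eps nu) \<and> \<phi> \<in> Kset \<delta> lam eps nu
        \<and> (\<lambda>n. wnorm lam nu (\<lambda>t. f n t - \<phi> t)) \<longlonglongrightarrow> 0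
        \<longrightarrow> (\<lambda>n. wnorm lam nu (\<lambda>t. Aop M K g (f n) t - Aop M K g \<phi> t)) \<longlonglongrightarrow> 0"
      using S.A_continuous by blast
    show "\<forall>f :: nat \<Rightarrow> real \<Rightarrow> real. (\<forall>n. f n \<in> Kset \<delta> lam eps nu)
        \<longrightarrow> (\<exists>r \<psi>. strict_mono r \<and> \<psi> \<in> Xsp lam nu
              \<and> (\<lambda>n. wnorm lam nu (\<lambda>t. Aop M K g (f (r n)) t - \<psi> t)) \<longlonglongrightarrow> 0)"
      using S.compact_A by blast
  qed
qed

end
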